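(* For any $\alpha\in(0,1)$, the map $\mathscr R_\alpha:\mathcal V_1\to\mathcal V_1$ is continuous with respect to the norm $f\mapsto\|\rho f\|_{L^\infty}$.
   Context: Fix $\alpha\in(0,1)$ and set $c_{1,\alpha}=\frac{2^{2\alpha-1}\Gamma(\frac12+\alpha)}{\sqrt{\pi}\,\Gamma(1-\alpha)}$. For $\gamma\in(-1,1)$ define $F_{1,\gamma}$ on $(0,\infty)$ by $F_{1,\gamma}(t)=\frac{2\gamma(2+\gamma)t-(1+\gamma-t)(1+t)|1+t|^{\gamma}+(1-t)(1+\gamma+t)|1-t|^{\gamma}}{\gamma(1+\gamma)(2+\gamma)t}$ if $\gamma\neq0$ and $F_{1,0}(t)=1-\frac{1-t^2}{2t}\log\left|\frac{t+1}{t-1}\right|$, extended by continuity to $t=0$ (value $0$) and to $t=1$, and evenly to $t<0$. Let $\rho(x)=(1+|x|)^{-\alpha}$ and $\mathcal V_0=\{f\in C(\mathbb{R}): f\text{ even},\ \|\rho f\|_{L^\infty}<\infty\}$. Let $\eta=2\left(\frac{3}{2(3-2\alpha)(5-2\alpha)(1+4^{\alpha})}\right)^{1/\min(\alpha,1-\alpha)}$. $\mathcal V_1$ is the set of $f\in\mathcal V_0$ such that $f(0)=1$; $f\ge0$ and $f$ is non-increasing on $[0,\infty)$; $x\mapsto f(\sqrt x)$ is convex on $[0,\infty)$; $f(x)\ge\max(0,1-x^2)$ for all $x$; and $f'_-(1/2)\le-\eta$. For $f\in\mathcal V_1$ define $\mathscr T_\alpha(f)(x)=c_{1,\alpha}\int_0^\infty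 f'(\xi)\,\xi^{2-2\alpha}F_{1,1-2\alpha}(x/\xi)\,d\xi$, $c(f)=\frac{2\alpha(1+2\alpha)}{3}c_{1,\alpha}\int_0^\infty\frac{1-f(\xi)}{\xi^{1+2\alpha}}\,d\xi$, and $\mathscr R_\alpha(f)(x)=\max\big(0,1+\mathscr T_\alpha(f)(x)/c(f)\big)$; $\mathscr R_\alpha$ maps $\mathcal V_1$ into itself. *)

theory Defs
  imports "HOL-Analysis.Analysis"
begin

definition c1 :: "real \<Rightarrow> real" where
  "c1 \<alpha> = 2 powr (2*\<alpha> - 1) * Gamma (1/2 + \<alpha>) / (sqrt pi * Gamma (1 - \<alpha>))"

definition F1_raw :: "real \<Rightarrow> real \<Rightarrow> real" where
  "F1_raw \<gamma> t =
     (if \<gamma> \<noteq> 0 then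
        (2*\<gamma>*(2+\<gamma>)*t - (1+\<gamma>-t)*(1+t)*\<bar>1+t\<bar> powr \<gamma>
           + (1-t)*(1+\<gamma>+t)*\<bar>1-t\<bar> powr \<gamma>) / (\<gamma>*(1+\<gamma>)*(2+\<gamma>)*t)
      else 1 - (1 - t^2)/(2*t) * ln \<bar>(t+1)/(t-1)\<bar>)"

text \<open>Extension by continuity to t = 0 (value 0) and t = 1, and evenly to t < 0.
  The value at t = 1 is the limit of the formula (gamma > -1).\<close>
definition F1 :: "real \<Rightarrow> real \<Rightarrow> real" where
  "F1 \<gamma> t =
     (if t = 0 then 0
      else if \<bar>t\<bar> = 1 then
        (if \<gamma> \<noteq> 0 then (2*(2+\<gamma>) - 2 powr (1+\<gamma>)) / ((1+\<gamma>)*(2+\<gamma>)) else 1)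
      else F1_raw \<gamma> \<bar>t\<bar>)"

definition rho :: "real \<Rightarrow> real \<Rightarrow> real" where
  "rho \<alpha> x = (1 + \<bar>x\<bar>) powr (-\<alpha>)"

text \<open>The weighted norm f \<mapsto> \<parallel>rho f\<parallel>_{L^\<infinity>} (f is continuous, so ess sup = sup).\<close>
definition wnorm :: "real \<Rightarrow> (real \<Rightarrow> real) \<Rightarrow> real" where
  "wnorm \<alpha> f = (SUP x. \<bar>rho \<alpha> x * f x\<bar>)"

definition V0 :: "real \<Rightarrow> (real \<Rightarrow> real) set" where
  "V0 \<alpha> = {f. continuous_on UNIV f \<and> (\<forall>x. f (-x) = f x) \<and>
               bdd_above (range (\<lambda>x. \<bar>rho \<alpha> x * f x\<bar>))}"

definition eta :: "real \<Rightarrow> real" where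
  "eta \<alpha> = 2 * (3 / (2*(3 - 2*\<alpha>)*(5 - 2*\<alpha>)*(1 + 4 powr \<alpha>))) powr (1 / min \<alpha> (1 - \<alpha>))"

definition V1 :: "real \<Rightarrow> (real \<Rightarrow> real) set" where
  "V1 \<alpha> = {f. f \<in> V0 \<alpha> \<and> f 0 = 1 \<and>
               (\<forall>x\<ge>0. f x \<ge> 0) \<and> (\<forall>x y. 0 \<le> x \<and> x \<le> y \<longrightarrow> f y \<le> f x) \<and>
               convex_on {0..} (\<lambda>x. f (sqrt x)) \<and>
               (\<forall>x. f x \<ge> max 0 (1 - x^2)) \<and>
               (\<exists>L. ((\<lambda>x. (f x - f (1/2)) / (x - 1/2)) \<longlongrightarrow> L) (at_left (1/2)) \<and> L \<le> - eta \<alpha>)}"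

definition T_op :: "real \<Rightarrow> (real \<Rightarrow> real) \<Rightarrow> real \<Rightarrow> real" where
  "T_op \<alpha> f x = c1 \<alpha> * set_lebesgue_integral lborel {0<..}
      (\<lambda>\<xi>. deriv f \<xi> * \<xi> powr (2 - 2*\<alpha>) * F1 (1 - 2*\<alpha>) (x / \<xi>))"

definition c_f :: "real \<Rightarrow> (real \<Rightarrow> real) \<Rightarrow> real" where
  "c_f \<alpha> f = (2*\<alpha>*(1 + 2*\<alpha>)/3) * c1 \<alpha> *
      set_lebesgue_integral lborel {0<..} (\<lambda>\<xi>. (1 - f \<xi>) / \<xi> powr (1 + 2*\<alpha>))"

definition R_op :: "real \<Rightarrow> (real \<Rightarrow> real) \<Rightarrow> real \<Rightarrow> real" where
  "R_op \<alpha> f x = max 0 (1 + T_op \<alpha> f x / c_f \<alpha> f)"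

end

theory Submission
  imports Defs
begin

lemma powr_shift: "(x::real) > 0 \<Longrightarrow> x * x powr (a - 1) = x powr a"
  by (simp add: powr_diff)
lemma powr_shift2: "(x::real) > 0 \<Longrightarrow> x * x powr (a - 2) = x powr (a - 1)"
  by (metis diff_diff_eq one_add_one powr_shift)

definition N1 :: "real \<Rightarrow> real \<Rightarrow> real" where
  "N1 c t = 2*c*(2+c)*t - (1+c-t)*(1+t)*(1+t) powr c + (1+c+t)*(1-t)*(1-t) powr c"
definition Phi :: "real \<Rightarrow> real \<Rightarrow> real" where
  "Phi c t = 2*c - (c-t)*(1+t) powr c - (c+t)*(1-t) powr c"
definition om :: "real \<Rightarrow> real \<Rightarrow> real" where
  "om c s = (s - c) * s powr (c-1)"

lemma om_deriv:
  assumes "s > 0"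
  shows "(om c has_real_derivative c * s powr (c-2) * (s+1-c)) (at s)"
proof -
  have D: "(om c has_real_derivative (1 * s powr (c-1) + (s - c) * ((c-1) * s powr (c-1-1)))) (at s)"
    unfolding om_def using assms by (auto intro!: derivative_eq_intros)
  have e: "s powr (c-1) = s * s powr (c-2)"
    using assms powr_shift2 by simp
  have "1 * s powr (c-1) + (s - c) * ((c-1) * s powr (c-1-1)) = c * s powr (c-2) * (s+1-c)"
    by (simp only: e diff_diff_eq one_add_one) (simp add: algebra_simps)
  with D show ?thesis by simp
qed

lemma Phi_deriv:
  assumes "-1 < t" "t < 1"
  shows "(Phi c has_real_derivative (1+c)*(om c (1+t) - om c (1-t))) (at t)"
proof -
  have D: "(Phi c has_real_derivative
      (- ((-1) * (1+t) powr c + (c-t) * (c * (1+t) powr (c-1)))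
       - (1 * (1-t) powr c + (c+t) * (c * (1-t) powr (c-1) * (-1))))) (at t)"
    unfolding Phi_def using assms by (auto intro!: derivative_eq_intros)
  have e1: "(1+t) powr c = (1+t) * (1+t) powr (c-1)"
    using assms powr_shift[of "1+t" c] by simp
  have e2: "(1-t) powr c = (1-t) * (1-t) powr (c-1)"
    using assms powr_shift[of "1-t" c] by simp
  have "(- ((-1) * (1+t) powr c + (c-t) * (c * (1+t) powr (c-1)))
       - (1 * (1-t) powr c + (c+t) * (c * (1-t) powr (c-1) * (-1)))) = (1+c)*(om c (1+t) - om c (1-t))"
    unfolding om_def by (simp only: e1 e2) (simp add: algebra_simps)
  with D show ?thesis by simp
qed

lemma N1_deriv:
  assumes "-1 < t" "t < 1"
  shows "(N1 c has_real_derivative (2+c) * Phi c t) (at t)"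
proof -
  have D: "(N1 c has_real_derivative
      2*c*(2+c) - ((-1)*(1+t)*(1+t) powr c + (1+c-t)*1*(1+t) powr c + (1+c-t)*(1+t)*(c*(1+t) powr (c-1)))
      + (1*(1-t)*(1-t) powr c + (1+c+t)*(-1)*(1-t) powr c + (1+c+t)*(1-t)*(c*(1-t) powr (c-1)*(-1)))) (at t)"
    unfolding N1_def using assms by (auto intro!: derivative_eq_intros simp: algebra_simps)
  have e1: "(1+t) * (1+t) powr (c-1) = (1+t) powr c"
    using assms powr_shift[of "1+t" c] by simp
  have e2: "(1-t) * (1-t) powr (c-1) = (1-t) powr c"
    using assms powr_shift[of "1-t" c] by simp
  have "2*c*(2+c) - ((-1)*(1+t)*(1+t) powr c + (1+c-t)*1*(1+t) powr c + (1+c-t)*(1+t)*(c*(1+t) powr (c-1)))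
      + (1*(1-t)*(1-t) powr c + (1+c+t)*(-1)*(1-t) powr c + (1+c+t)*(1-t)*(c*(1-t) powr (c-1)*(-1)))
      = (2+c) * Phi c t"
  proof -
    have "(1+c-t)*(1+t)*(c*(1+t) powr (c-1)) = (1+c-t)*c*((1+t)*(1+t) powr (c-1))" by simp
    moreover have "(1+c+t)*(1-t)*(c*(1-t) powr (c-1)*(-1)) = -(1+c+t)*c*((1-t)*(1-t) powr (c-1))" by (simp add: algebra_simps)
    ultimately show ?thesis unfolding Phi_def e1 e2 by (simp add: algebra_simps)
  qed
  with D show ?thesis by simp
qed


lemma om_diff:
  assumes "0 < s" "s < 1" "-1 < c" "c < 1" "c \<noteq> 0"
  shows "0 \<le> (om c (1+s) - om c (1-s)) / c \<and> (s \<le> 1/2 \<longrightarrow> (om c (1+s) - om c (1-s)) / c \<le> 56 * s)"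
proof -
  obtain z where z: "1-s < z" "z < 1+s" "om c (1+s) - om c (1-s) = ((1+s) - (1-s)) * (c * z powr (c-2) * (z+1-c))"
    using MVT2[of "1-s" "1+s" "om c" "\<lambda>z. c * z powr (c-2) * (z+1-c)"] om_deriv assms by force
  have q: "(om c (1+s) - om c (1-s)) / c = 2 * s * (z powr (c-2) * (z+1-c))"
    using z(3) assms by (simp add: field_simps)
  have zp: "z > 0" using z assms by simp
  have a: "0 \<le> z powr (c-2) * (z+1-c)" using zp assms by simp
  moreover have "s \<le> 1/2 \<longrightarrow> z powr (c-2) * (z+1-c) \<le> 8 * (7/2)"
  proof
    assume "s \<le> 1/2"
    then have z2: "z \<ge> 1/2" "z \<le> 3/2" using z by auto
    have "z powr (c-2) \<le> (1/2) powr (c-2)"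
      using z2 assms by (intro powr_mono2') auto
    also have "(1/2::real) powr (c-2) = 2 powr (2-c)"
      by (simp add: powr_minus_divide[symmetric] powr_divide)
    also have "\<dots> \<le> 2 powr 3" using assms by (intro powr_mono) auto
    finally have "z powr (c-2) \<le> 8" by simp
    moreover have "z+1-c \<le> 7/2" using z2 assms by simp
    moreover have "z+1-c \<ge> 0" using z2 assms by simp
    ultimately show "z powr (c-2) * (z+1-c) \<le> 8 * (7/2)"
      by (intro mult_mono) auto
  qed
  ultimately have b: "s \<le> 1/2 \<longrightarrow> 2 * s * (z powr (c-2) * (z+1-c)) \<le> 2 * s * 28"
    using assms by (intro impI mult_left_mono) auto
  have "0 \<le> 2 * s * (z powr (c-2) * (z+1-c))" using a assms by simp
  with b show ?thesis unfolding q by simp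
qed


lemma Phi0: "Phi c 0 = 0" by (simp add: Phi_def)
lemma N10: "N1 c 0 = 0" by (simp add: N1_def)

lemma Phi_bound:
  assumes "0 < t" "t < 1" "-1 < c" "c < 1" "c \<noteq> 0"
  shows "0 \<le> Phi c t / c \<and> (t \<le> 1/2 \<longrightarrow> Phi c t / c \<le> 112 * t^2)"
proof -
  obtain z where z: "0 < z" "z < t" "Phi c t - Phi c 0 = (t - 0) * ((1+c)*(om c (1+z) - om c (1-z)))"
    using MVT2[of 0 t "Phi c" "\<lambda>z. (1+c)*(om c (1+z) - om c (1-z))"] Phi_deriv assms by force
  have q: "Phi c t / c = t * (1+c) * ((om c (1+z) - om c (1-z)) / c)"
    using z(3) by (simp add: Phi0)
  have o: "0 \<le> (om c (1+z) - om c (1-z)) / c \<and> (z \<le> 1/2 \<longrightarrow> (om c (1+z) - om c (1-z)) / c \<le> 56 * z)"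
    using om_diff[of z c] z assms by simp
  have "0 \<le> t * (1+c)" using assms by simp
  then have A: "0 \<le> Phi c t / c" unfolding q using o assms by (intro mult_nonneg_nonneg) auto
  have "t \<le> 1/2 \<longrightarrow> Phi c t / c \<le> 112 * t^2"
  proof
    assume "t \<le> 1/2"
    then have "(om c (1+z) - om c (1-z)) / c \<le> 56 * t" using o z by auto
    then have "t * (1+c) * ((om c (1+z) - om c (1-z)) / c) \<le> t * (1+c) * (56 * t)"
      using \<open>0 \<le> t * (1+c)\<close> by (rule mult_left_mono)
    also have "\<dots> \<le> t * 2 * (56 * t)" using assms by (intro mult_right_mono mult_left_mono) auto
    finally show "Phi c t / c \<le> 112 * t^2" unfolding q by (simp add: power2_eq_square)
  qed
  with A show ?thesis by blast
qed

lemma N1_bound: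
  assumes "0 < t" "t < 1" "-1 < c" "c < 1" "c \<noteq> 0"
  shows "0 \<le> N1 c t / c \<and> (t \<le> 1/2 \<longrightarrow> N1 c t / c \<le> 336 * t^3)"
proof -
  obtain z where z: "0 < z" "z < t" "N1 c t - N1 c 0 = (t - 0) * ((2+c) * Phi c z)"
    using MVT2[of 0 t "N1 c" "\<lambda>z. (2+c) * Phi c z"] N1_deriv assms by force
  have q: "N1 c t / c = t * (2+c) * (Phi c z / c)"
    using z(3) by (simp add: N10)
  have o: "0 \<le> Phi c z / c \<and> (z \<le> 1/2 \<longrightarrow> Phi c z / c \<le> 112 * z^2)"
    using Phi_bound[of z c] z assms by simp
  have "0 \<le> t * (2+c)" using assms by simp
  then have A: "0 \<le> N1 c t / c" unfolding q using o assms by (intro mult_nonneg_nonneg) auto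
  have "t \<le> 1/2 \<longrightarrow> N1 c t / c \<le> 336 * t^3"
  proof
    assume "t \<le> 1/2"
    then have "z^2 \<le> t^2" using z by (intro power_mono) auto
    moreover have "Phi c z / c \<le> 112 * z^2" using o z \<open>t \<le> 1/2\<close> by auto
    ultimately have "Phi c z / c \<le> 112 * t^2" by linarith
    then have "t * (2+c) * (Phi c z / c) \<le> t * (2+c) * (112 * t^2)"
      using \<open>0 \<le> t * (2+c)\<close> by (rule mult_left_mono)
    also have "\<dots> \<le> t * 3 * (112 * t^2)" using assms by (intro mult_right_mono mult_left_mono) auto
    finally show "N1 c t / c \<le> 336 * t^3" unfolding q by (simp add: power3_eq_cube power2_eq_square)
  qed
  with A show ?thesis by blast
qed


lemma mvt_powr:
  fixes a b p :: real
  assumes "0 < b" "b < a"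
  shows "\<exists>z. b < z \<and> z < a \<and> a powr p - b powr p = (a - b) * (p * z powr (p - 1))"
proof -
  have "\<And>x. b \<le> x \<Longrightarrow> x \<le> a \<Longrightarrow> ((\<lambda>x. x powr p) has_real_derivative p * x powr (p - 1)) (at x)"
    using assms by (auto intro!: derivative_eq_intros)
  then show ?thesis using MVT2[OF assms(2), of "\<lambda>x. x powr p" "\<lambda>x. p * x powr (p - 1)"] by auto
qed

definition N2 :: "real \<Rightarrow> real \<Rightarrow> real" where
  "N2 c t = 2*c*(2+c)*t - (1+c-t)*(1+t) powr (1+c) - (1+c+t)*(t-1) powr (1+c)"
definition Phi2 :: "real \<Rightarrow> real \<Rightarrow> real" where
  "Phi2 c t = 2*c + (t-c)*(1+t) powr c - (t+c)*(t-1) powr c"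

lemma N2_deriv:
  assumes "1 < t" "-1 < c"
  shows "(N2 c has_real_derivative (2+c) * Phi2 c t) (at t)"
proof -
  have D: "(N2 c has_real_derivative
      2*c*(2+c) - ((-1)*(1+t) powr (1+c) + (1+c-t)*((1+c)*(1+t) powr (1+c-1)))
      - (1*(t-1) powr (1+c) + (1+c+t)*((1+c)*(t-1) powr (1+c-1)))) (at t)"
    unfolding N2_def using assms by (auto intro!: derivative_eq_intros)
  have e1: "(1+t) powr (1+c) = (1+t) * (1+t) powr c"
    using assms powr_shift[of "1+t" "1+c"] by simp
  have e2: "(t-1) powr (1+c) = (t-1) * (t-1) powr c"
    using assms powr_shift[of "t-1" "1+c"] by simp
  have "2*c*(2+c) - ((-1)*(1+t) powr (1+c) + (1+c-t)*((1+c)*(1+t) powr (1+c-1)))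
      - (1*(t-1) powr (1+c) + (1+c+t)*((1+c)*(t-1) powr (1+c-1))) = (2+c) * Phi2 c t"
    unfolding Phi2_def e1 e2 by (simp add: algebra_simps)
  with D show ?thesis by simp
qed

lemma tangent_powr:
  fixes b d c :: real
  assumes "0 < b" "b < d" "c < 1" "c \<noteq> 0"
  shows "(d - b) * d powr (c - 1) \<le> (d powr c - b powr c) / c"
proof -
  obtain z where z: "b < z" "z < d" "d powr c - b powr c = (d - b) * (c * z powr (c - 1))"
    using mvt_powr[OF assms(1,2), of c] by auto
  have "(d powr c - b powr c) / c = (d - b) * z powr (c - 1)" using z assms by simp
  moreover have "d powr (c - 1) \<le> z powr (c - 1)"
    using z assms by (intro powr_mono2') auto
  ultimately show ?thesis using assms by (simp add: mult_left_mono)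
qed

lemma Phi2_pos:
  assumes "1 < t" "-1 < c" "c < 1" "c \<noteq> 0"
  shows "Phi2 c t / c \<ge> 2"
proof -
  define b where "b = t - 1"
  have b: "b > 0" using assms b_def by simp
  define H where "H s = ((b+s) powr (1+c) - b powr (1+c))/(1+c) - s*(b powr c + (b+s) powr c)/2" for s
  have HD: "(H has_real_derivative ((b+s) powr c - b powr c - s*c*(b+s) powr (c-1))/2) (at s)"
    if "0 \<le> s" for s
  proof -
    have D: "(H has_real_derivative
       ((1+c)*(b+s) powr (1+c-1) * 1)/(1+c) - ((1*(b powr c + (b+s) powr c) + s*(c*(b+s) powr (c-1)*1))/2)) (at s)"
      unfolding H_def using that b assms by (auto intro!: derivative_eq_intros)
    have eq: "(1+c)*(b+s) powr (1+c-1)*1/(1+c) = (b+s) powr c" using assms by simp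
    show ?thesis using D unfolding eq by (rule DERIV_cong) (simp add: field_simps)
  qed
  obtain z where z: "0 < z" "z < 2" "H 2 - H 0 = (2 - 0) * (((b+z) powr c - b powr c - z*c*(b+z) powr (c-1))/2)"
    using MVT2[of 0 2 H] HD by force
  have "z * (b+z) powr (c-1) \<le> ((b+z) powr c - b powr c) / c"
    using tangent_powr[of b "b+z" c] b z assms by simp
  then have "0 \<le> ((b+z) powr c - b powr c - z*c*(b+z) powr (c-1)) / c"
    using assms by (simp add: diff_divide_distrib)
  moreover have "H 0 = 0" by (simp add: H_def)
  then have "H 2 = (b+z) powr c - b powr c - z*c*(b+z) powr (c-1)" using z(3) by simp
  ultimately have H2: "0 \<le> H 2 / c" by simp
  have "Phi2 c t = (1+c) * H 2 + 2*c"
  proof -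
    have e1: "(b+2) powr (1+c) = (b+2) * (b+2) powr c" using b powr_shift[of "b+2" "1+c"] by simp
    have e2: "b powr (1+c) = b * b powr c" using b powr_shift[of "b" "1+c"] by simp
    have tb: "t = b + 1" "1 + t = b + 2" "t - 1 = b" using b_def by auto
    show ?thesis unfolding Phi2_def H_def tb e1 e2 using assms by (simp add: field_simps)
  qed
  then have "Phi2 c t / c = (1+c) * (H 2 / c) + 2" using assms by (simp add: field_simps)
  moreover have "0 \<le> (1+c) * (H 2 / c)" using H2 assms by (intro mult_nonneg_nonneg) auto
  ultimately show ?thesis by simp
qed


lemma N2_at1: "-1 < c \<Longrightarrow> N2 c 1 = c * (2*(2+c) - 2 powr (1+c))"
  by (simp add: N2_def algebra_simps)

lemma two_powr_ineq:
  fixes c :: real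
  assumes "-1 < c" "c < 1"
  shows "2 powr (1+c) < 2*(2+c)"
proof (cases "c \<le> 0")
  case True
  then have "2 powr (1+c) \<le> 2 powr 1" by (intro powr_mono) auto
  then show ?thesis using assms by simp
next
  case False
  then have "2 powr (1+c) \<le> 2 powr 2" using assms by (intro powr_mono) auto
  then show ?thesis using assms False by simp
qed

lemma N2_cont: "-1 < c \<Longrightarrow> continuous_on {1..} (N2 c)"
  unfolding N2_def by (intro continuous_intros continuous_on_powr') auto

lemma N2_lower:
  assumes "1 \<le> t" "-1 < c" "c < 1" "c \<noteq> 0"
  shows "N2 c t / c \<ge> 2*(2+c) - 2 powr (1+c)"
proof -
  have "N2 c 1 / c \<le> N2 c t / c"
  proof (rule DERIV_nonneg_imp_increasing_open[OF assms(1)])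
    fix x assume x: "1 < x" "x < t"
    have "((\<lambda>t. N2 c t / c) has_real_derivative (2+c) * Phi2 c x / c) (at x)"
      using N2_deriv[of x c] x assms by (auto intro!: derivative_eq_intros)
    moreover have "(2+c) * Phi2 c x / c \<ge> 0"
      using Phi2_pos[of x c] x assms by (simp add: mult_nonneg_nonneg times_divide_eq_right[symmetric] del: times_divide_eq_right)
    ultimately show "\<exists>y. ((\<lambda>t. N2 c t / c) has_real_derivative y) (at x) \<and> 0 \<le> y" by blast
  next
    show "continuous_on {1..t} (\<lambda>t. N2 c t / c)"
      using N2_cont[of c] assms by (intro continuous_intros) (auto elim: continuous_on_subset)
  qed
  then show ?thesis using N2_at1[of c] assms by simp
qed

lemma N2_upper:
  assumes "1 < t" "-1 < c" "c < 1" "c \<noteq> 0"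
  shows "N2 c t / c \<le> 30 * t / \<bar>c\<bar>"
proof -
  define a where "a = 1 + t"
  define b where "b = t - 1"
  have ab: "0 < b" "b < a" "1 \<le> a" using assms a_def b_def by auto
  have ea: "a powr (2+c) = a * a powr (1+c)" using ab powr_shift[of a "2+c"] by simp
  have eb: "b powr (2+c) = b * b powr (1+c)" using ab powr_shift[of b "2+c"] by simp
  have N: "N2 c t = 2*c*(2+c)*t - (2+c) * a powr (1+c) + (a powr (2+c) - b powr (2+c)) - (2+c) * b powr (1+c)"
    unfolding N2_def ea eb by (simp add: a_def b_def algebra_simps)
  obtain z where z: "b < z" "z < a" "a powr (2+c) - b powr (2+c) = (a - b) * ((2+c) * z powr (2+c-1))"
    using mvt_powr[OF ab(1,2), of "2+c"] by auto
  have z2: "a powr (2+c) - b powr (2+c) = 2 * (2+c) * z powr (1+c)"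
  proof -
    have "a - b = 2" "2 + c - 1 = 1 + c" using a_def b_def by auto
    then show ?thesis using z(3) by simp
  qed
  define A where "A = a powr (1+c)"
  define B where "B = b powr (1+c)"
  define Z where "Z = z powr (1+c)"
  have NN: "N2 c t = 2*c*(2+c)*t + (2+c) * (2*Z - A - B)"
    unfolding N z2 A_def B_def Z_def by (simp add: algebra_simps)
  have B0: "B \<ge> 0" unfolding B_def by simp
  have X0: "c*(2+c) = (1+c)^2 - 1" by (simp add: algebra_simps power2_eq_square)
  have "(1+c)^2 \<le> 2^2" using assms by (intro power_mono) auto
  then have X1: "c*(2+c) \<le> 3" unfolding X0 by simp
  have X2: "c*(2+c) \<ge> -1" unfolding X0 by simp
  show ?thesis
  proof (cases "c > 0")
    case True
    have "Z \<le> A" unfolding Z_def A_def using z ab assms by (intro powr_mono2) auto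
    then have m: "(2+c) * (2*Z - A - B) \<le> (2+c) * (A - B)" using assms by (intro mult_left_mono) auto
    obtain w where w: "b < w" "w < a" "a powr (1+c) - b powr (1+c) = (a - b) * ((1+c) * w powr (1+c-1))"
      using mvt_powr[OF ab(1,2), of "1+c"] by auto
    have wa: "w powr c \<le> a" 
    proof -
      have "w powr c \<le> a powr c" using w ab True by (intro powr_mono2) auto
      also have "\<dots> \<le> a powr 1" using ab assms by (intro powr_mono) auto
      finally show ?thesis using ab by simp
    qed
    have "A - B = 2 * (1+c) * w powr c" unfolding A_def B_def using w(3) a_def b_def by simp
    also have "\<dots> \<le> 2 * (1+c) * a" using wa assms by (intro mult_left_mono) auto
    finally have "(2+c) * (A - B) \<le> (2+c) * (2 * (1+c) * a)" using assms by (intro mult_left_mono) auto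
    also have "\<dots> = 2 * ((2+c) * (1+c)) * a" by simp
    also have "\<dots> \<le> 2 * 6 * a"
    proof -
      have "(2+c) * (1+c) \<le> 3 * 2" using assms by (intro mult_mono) auto
      then show ?thesis using ab by (intro mult_right_mono) (auto simp: mult.commute)
    qed
    finally have "(2+c) * (2*Z - A - B) \<le> 12 * a" using m by simp
    moreover have "2*c*(2+c)*t \<le> 6 * t"
    proof -
      have "2*c*(2+c)*t = 2*(c*(2+c))*t" by simp
      also have "\<dots> \<le> 2*3*t" using X1 assms by (intro mult_right_mono mult_left_mono) auto
      finally show ?thesis by simp
    qed
    ultimately have "N2 c t \<le> 30 * t" unfolding NN using a_def assms by linarith
    then show ?thesis using True by (simp add: divide_right_mono)
  next
    case False
    then have cn: "c < 0" using assms by simp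
    have aa: "A \<le> a" unfolding A_def using ab assms cn powr_mono[of "1+c" 1 a] by simp
    have "B \<le> Z" unfolding Z_def B_def using z ab assms by (intro powr_mono2) auto
    then have "2*Z - A - B \<ge> - a" using aa B0 by simp
    then have "(2+c) * (2*Z - A - B) \<ge> (2+c) * (- a)" using assms by (intro mult_left_mono) auto
    moreover have "(2+c) * (- a) \<ge> 3 * (-a)" using assms ab by (intro mult_right_mono_neg) auto
    moreover have "2*c*(2+c)*t \<ge> -2 * t"
    proof -
      have "2*c*(2+c)*t = 2*(c*(2+c))*t" by simp
      also have "\<dots> \<ge> 2*(-1)*t" using X2 assms by (intro mult_right_mono mult_left_mono) auto
      finally show ?thesis by simp
    qed
    ultimately have "N2 c t \<ge> -12 * t" unfolding NN using assms a_def by linarith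
    then have "N2 c t / c \<le> (-12 * t) / c" using cn by (intro divide_right_mono_neg) auto
    also have "\<dots> = 12 * t / \<bar>c\<bar>" using cn by simp
    also have "\<dots> \<le> 30 * t / \<bar>c\<bar>" using assms by (simp add: divide_right_mono)
    finally show ?thesis .
  qed
qed


lemma F1_raw_lt1:
  assumes "0 < s" "s < 1" "c \<noteq> 0"
  shows "F1_raw c s = (N1 c s / c) / ((1+c)*(2+c)* s)"
proof -
  have "\<bar>1+s\<bar> = 1+s" "\<bar>1-s\<bar> = 1-s" using assms by auto
  then show ?thesis unfolding F1_raw_def N1_def using assms by (simp add: field_simps)
qed

lemma F1_raw_gt1:
  assumes "1 < s" "c \<noteq> 0" "-1 < c"
  shows "F1_raw c s = (N2 c s / c) / ((1+c)*(2+c)* s)"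
proof -
  have e1: "\<bar>1+s\<bar> = 1+s" "\<bar>1-s\<bar> = s-1" using assms by auto
  have e2: "(1+s) * (1+s) powr c = (1+s) powr (1+c)" using assms powr_shift[of "1+s" "1+c"] by simp
  have e3: "(s-1) * (s-1) powr c = (s-1) powr (1+c)" using assms powr_shift[of "s-1" "1+c"] by simp
  have "(1+c-s)*(1+s)*(1+s) powr c = (1+c-s)*(1+s) powr (1+c)" using e2 by (simp add: mult.assoc)
  moreover have "(1-s)*(1+c+s)*(s-1) powr c = -(1+c+s)*(s-1) powr (1+c)" using e3
    by (simp add: algebra_simps)
  ultimately show ?thesis unfolding F1_raw_def N2_def e1 using assms by (simp add: field_simps)
qed

lemma N1_crude:
  assumes "0 < s" "s < 1" "-1 < c" "c < 1"
  shows "\<bar>N1 c s\<bar> \<le> 17"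
proof -
  have a1: "\<bar>2*c*(2+c)* s\<bar> \<le> 6"
  proof -
    have "\<bar>2*c*(2+c)* s\<bar> = 2*\<bar>c\<bar>*(2+c)* s" using assms by (simp add: abs_mult)
    also have "\<dots> \<le> 2*1*3*1" using assms by (intro mult_mono) auto
    finally show ?thesis by simp
  qed
  have p: "(1+s) powr c \<le> 2"
  proof -
    have "(1+s) powr c \<le> (1+s) powr 1" using assms by (intro powr_mono) auto
    then show ?thesis using assms by simp
  qed
  have a2: "\<bar>(1+c-s)*(1+s)*(1+s) powr c\<bar> \<le> 8"
  proof -
    have "\<bar>(1+c-s)*(1+s)*(1+s) powr c\<bar> = \<bar>1+c-s\<bar>*(1+s)*(1+s) powr c" using assms by (simp add: abs_mult)
    also have "\<dots> \<le> 2*2*2" using assms p by (intro mult_mono) auto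
    finally show ?thesis by simp
  qed
  have q: "(1-s)*(1-s) powr c \<le> 1"
  proof -
    have "(1-s)*(1-s) powr c = (1-s) powr (1+c)" using assms powr_shift[of "1-s" "1+c"] by simp
    also have "\<dots> \<le> 1" using assms by (intro powr_le1) auto
    finally show ?thesis .
  qed
  have a3: "\<bar>(1+c+s)*(1-s)*(1-s) powr c\<bar> \<le> 3"
  proof -
    have "\<bar>(1+c+s)*(1-s)*(1-s) powr c\<bar> = (1+c+s)*((1-s)*(1-s) powr c)" using assms by (simp add: abs_mult)
    also have "\<dots> \<le> 3*1" using assms q by (intro mult_mono) auto
    finally show ?thesis by simp
  qed
  show ?thesis unfolding N1_def using a1 a2 a3 by linarith
qed

lemma F1_nz_bound:
  assumes "-1 < c" "c < 1" "c \<noteq> 0"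
  shows "0 \<le> F1 c t \<and> F1 c t \<le> 400/(\<bar>c\<bar>*(1+c)) * min 1 (t^2)"
proof -
  define D where "D = \<bar>c\<bar>*(1+c)"
  define C where "C = 400/D"
  have Dpos: "D > 0" using assms D_def by simp
  have ac: "\<bar>c\<bar> \<le> 1" using assms by simp
  have D1: "D \<le> (1+c)" unfolding D_def using ac assms by (simp add: mult_left_le_one_le)
  have D2: "D \<le> (1+c)*(2+c)"
  proof -
    have "(1+c) * 1 \<le> (1+c)*(2+c)" using assms by (intro mult_left_mono) auto
    then show ?thesis using D1 by simp
  qed
  have Cge: "K / Z \<le> C" if "0 \<le> K" "K \<le> 400" "D \<le> Z" for K Z
    unfolding C_def using Dpos that by (intro frac_le) auto
  have t2': "min 1 (t^2) = min 1 (\<bar>t\<bar>^2)" by simp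
  consider "t = 0" | "\<bar>t\<bar> = 1" | "0 < \<bar>t\<bar>" "\<bar>t\<bar> < 1" | "1 < \<bar>t\<bar>"
    by linarith
  then have "0 \<le> F1 c t \<and> F1 c t \<le> C * min 1 (t^2)"
  proof cases
    case 1 then show ?thesis by (simp add: F1_def C_def)
  next
    case 2
    have v: "F1 c t = (2*(2+c) - 2 powr (1+c)) / ((1+c)*(2+c))" using 2 assms by (auto simp: F1_def)
    have p: "0 \<le> 2*(2+c) - 2 powr (1+c)" using two_powr_ineq[of c] assms by simp
    then have A: "0 \<le> F1 c t" unfolding v using assms by simp
    have "F1 c t \<le> C" unfolding v
    proof (rule Cge[OF p _ D2])
      have "0 < (2::real) powr (1+c)" by simp
      moreover have "2*(2+c) \<le> 6" using assms by simp
      ultimately show "2*(2+c) - 2 powr (1+c) \<le> 400" by linarith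
    qed
    then show ?thesis using A 2 unfolding t2' by simp
  next
    case 3
    define s where "s = \<bar>t\<bar>"
    have s: "0 < s" "s < 1" using 3 s_def by auto
    have v: "F1 c t = (N1 c s / c) / ((1+c)*(2+c)* s)" using 3 assms s F1_raw_lt1[of s c]
      by (simp add: F1_def s_def)
    have nb: "0 \<le> N1 c s / c \<and> (s \<le> 1/2 \<longrightarrow> N1 c s / c \<le> 336 * s^3)" using N1_bound[of s c] s assms by simp
    have den: "(1+c)*(2+c)* s > 0" using assms s by simp
    have A: "0 \<le> F1 c t" unfolding v by (rule divide_nonneg_pos[OF conjunct1[OF nb] den])
    have "s^2 \<le> 1^2" using s by (intro power_mono) auto
    then have m: "min 1 (t^2) = s^2" unfolding t2' s_def by simp
    have "F1 c t \<le> C * s^2"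
    proof (cases "s \<le> 1/2")
      case True
      then have "F1 c t \<le> (336 * s^3) / ((1+c)*(2+c)* s)" unfolding v using nb den by (intro divide_right_mono) auto
      also have "\<dots> = (336 / ((1+c)*(2+c))) * s^2"
      proof -
        have "336 * s^3 / ((1+c)*(2+c)* s) = ((336 * s^2) * s) / (((1+c)*(2+c)) * s)"
          by (simp add: power3_eq_cube power2_eq_square)
        also have "\<dots> = (336 * s^2) / ((1+c)*(2+c))" using s by (intro nonzero_mult_divide_mult_cancel_right) auto
        finally show ?thesis by simp
      qed
      also have "\<dots> \<le> C * s^2"
      proof -
        have "336 / ((1+c)*(2+c)) \<le> C" by (rule Cge) (use D2 in auto)
        then show ?thesis by (rule mult_right_mono) simp
      qed
      finally show ?thesis .
    next
      case False
      have "N1 c s / c \<le> \<bar>N1 c s\<bar> / \<bar>c\<bar>" using abs_ge_self[of "N1 c s / c"] by (simp only: abs_divide)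
      also have "\<dots> \<le> 17 / \<bar>c\<bar>" using N1_crude[of s c] s assms by (intro divide_right_mono) auto
      finally have "F1 c t \<le> (17 / \<bar>c\<bar>) / ((1+c)*(2+c)* s)" unfolding v using den by (intro divide_right_mono) auto
      also have "\<dots> = 17 / (D * ((2+c)* s))" unfolding D_def by (simp add: mult.assoc)
      also have "\<dots> \<le> 50 / (D * (1/2))"
      proof (intro frac_le)
        show "0 < D * (1/2)" using Dpos by simp
        have "(1::real)/2 = 1 * (1/2)" by simp
        also have "\<dots> \<le> (2+c) * s" using False assms by (intro mult_mono) auto
        finally show "D * (1/2) \<le> D * ((2+c) * s)" using Dpos by (intro mult_left_mono) auto
      qed auto
      also have "\<dots> = C * (1/4)" unfolding C_def by simp
      also have "\<dots> \<le> C * s^2"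
      proof -
        have "(1/2)^2 \<le> s^2" using False s by (intro power_mono) auto
        then have "1/4 \<le> s^2" by (simp add: power2_eq_square)
        moreover have "C \<ge> 0" unfolding C_def using Dpos by simp
        ultimately show "C * (1/4) \<le> C * s^2" by (intro mult_left_mono)
      qed
      finally show ?thesis .
    qed
    then show ?thesis using A m by simp
  next
    case 4
    define s where "s = \<bar>t\<bar>"
    have s: "1 < s" using 4 s_def by auto
    have v: "F1 c t = (N2 c s / c) / ((1+c)*(2+c)* s)" using 4 assms s F1_raw_gt1[of s c]
      by (simp add: F1_def s_def)
    have den: "(1+c)*(2+c)* s > 0" using assms s by simp
    have "N2 c s / c \<ge> 0" using N2_lower[of s c] two_powr_ineq[of c] s assms by simp
    then have A: "0 \<le> F1 c t" unfolding v using den by (rule divide_nonneg_pos)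
    have "1^2 \<le> s^2" using s by (intro power_mono) auto
    then have m: "min 1 (t^2) = 1" unfolding t2' s_def by simp
    have "F1 c t \<le> (30 * s / \<bar>c\<bar>) / ((1+c)*(2+c)* s)" unfolding v using den N2_upper[of s c] s assms
      by (intro divide_right_mono) auto
    also have "\<dots> = 30 / (D * (2+c))"
    proof -
      have "(30 * s / \<bar>c\<bar>) / ((1+c)*(2+c)* s) = (30 * s) / ((D * (2+c)) * s)"
        unfolding D_def by (simp add: mult_ac)
      also have "\<dots> = 30 / (D * (2+c))" using s by (intro nonzero_mult_divide_mult_cancel_right) auto
      finally show ?thesis .
    qed
    also have "\<dots> \<le> C"
    proof (intro Cge)
      show "D \<le> D * (2+c)" using Dpos assms by (simp add: mult_le_cancel_left1) 
    qed auto
    finally show ?thesis using A m by simp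
  qed
  then show ?thesis unfolding C_def D_def .
qed

definition G0 :: "real \<Rightarrow> real" where
  "G0 s = s - (1 - s^2)/2 * (ln (1+s) - ln (1-s))"

lemma G0_deriv:
  assumes "-1 < s" "s < 1"
  shows "(G0 has_real_derivative s * (ln (1+s) - ln (1-s))) (at s)"
proof -
  have n: "1 + s \<noteq> 0" "1 - s \<noteq> 0" using assms by auto
  have k: "(1/(1+s) + 1/(1-s)) * (1 - s^2) = 2"
  proof -
    have "1 - s^2 = (1+s)*(1-s)" by (simp add: algebra_simps power2_eq_square)
    moreover have gen: "\<And>a b x y::real. (a+b)*(x*y) = a*x*y + b*y*x" by (simp add: algebra_simps)
    ultimately have "(1/(1+s) + 1/(1-s)) * (1 - s^2) = (1/(1+s))*(1+s)*(1-s) + (1/(1-s))*(1-s)*(1+s)"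
      by metis
    also have "\<dots> = 2" using n by simp
    finally show ?thesis .
  qed
  show ?thesis unfolding G0_def
    using assms apply (auto intro!: derivative_eq_intros)
    apply (simp only: k)
    apply (simp add: diff_divide_distrib)
    done
qed

lemma L_bounds:
  fixes s :: real
  assumes "0 \<le> s" "s < 1"
  shows "0 \<le> ln (1+s) - ln (1-s) \<and> (s \<le> 1/2 \<longrightarrow> ln (1+s) - ln (1-s) \<le> 3 * s)"
proof -
  have a: "ln (1-s) \<le> ln (1+s)" using assms by (intro ln_mono) auto
  have "s \<le> 1/2 \<longrightarrow> ln (1+s) - ln (1-s) \<le> 3 * s"
  proof
    assume h: "s \<le> 1/2"
    have b: "ln (1+s) \<le> s" using assms by (intro ln_add_one_self_le_self) auto
    have "- ln (1-s) = ln (1/(1-s))" using assms by (simp add: ln_div)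
    also have "\<dots> \<le> 1/(1-s) - 1" using assms by (intro ln_le_minus_one) auto
    also have "\<dots> = s/(1-s)" using assms by (simp add: field_simps)
    also have "\<dots> \<le> s/(1/2)" using assms h by (intro divide_left_mono) auto
    finally show "ln (1+s) - ln (1-s) \<le> 3 * s" using b by simp
  qed
  with a show ?thesis by simp
qed

lemma G0_bound:
  assumes "0 < s" "s < 1"
  shows "0 \<le> G0 s \<and> (s \<le> 1/2 \<longrightarrow> G0 s \<le> 3 * s^3)"
proof -
  obtain z where z: "0 < z" "z < s" "G0 s - G0 0 = (s - 0) * (z * (ln (1+z) - ln (1-z)))"
    using MVT2[of 0 s G0 "\<lambda>z. z * (ln (1+z) - ln (1-z))"] G0_deriv assms by force
  have G00: "G0 0 = 0" by (simp add: G0_def)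
  have q: "G0 s = s * z * (ln (1+z) - ln (1-z))" using z G00 by simp
  have lb: "0 \<le> ln (1+z) - ln (1-z) \<and> (z \<le> 1/2 \<longrightarrow> ln (1+z) - ln (1-z) \<le> 3 * z)"
    using L_bounds[of z] z assms by simp
  have A: "0 \<le> G0 s" unfolding q using lb z assms by simp
  have "s \<le> 1/2 \<longrightarrow> G0 s \<le> 3 * s^3"
  proof
    assume h: "s \<le> 1/2"
    have "ln (1+z) - ln (1-z) \<le> 3 * s" using lb z h by auto
    then have "s * z * (ln (1+z) - ln (1-z)) \<le> s * z * (3 * s)" using z assms by (intro mult_left_mono) auto
    also have "\<dots> \<le> s * s * (3 * s)" using z assms by (intro mult_right_mono mult_left_mono) auto
    finally show "G0 s \<le> 3 * s^3" unfolding q by (simp add: power3_eq_cube)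
  qed
  with A show ?thesis by simp
qed

lemma F1_zero_bound:
  shows "0 \<le> F1 0 t \<and> F1 0 t \<le> 4 * min 1 (t^2)"
proof -
  have t2': "min 1 (t^2) = min 1 (\<bar>t\<bar>^2)" by simp
  consider "t = 0" | "\<bar>t\<bar> = 1" | "0 < \<bar>t\<bar>" "\<bar>t\<bar> < 1" | "1 < \<bar>t\<bar>"
    by linarith
  then show ?thesis
  proof cases
    case 1 then show ?thesis by (simp add: F1_def)
  next
    case 2 then show ?thesis unfolding t2' by (simp add: F1_def)
  next
    case 3
    define s where "s = \<bar>t\<bar>"
    have s: "0 < s" "s < 1" using 3 s_def by auto
    have e: "\<bar>(s+1)/(s-1)\<bar> = (1+s)/(1-s)" using s by (simp add: abs_divide field_simps)
    have v: "F1 0 t = G0 s / s"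
    proof -
      have "F1 0 t = 1 - (1 - s^2)/(2* s) * ln ((1+s)/(1-s))"
        using 3 s e by (simp add: F1_def F1_raw_def s_def)
      also have "ln ((1+s)/(1-s)) = ln (1+s) - ln (1-s)" using s by (simp add: ln_div)
      finally show ?thesis unfolding G0_def using s by (simp add: field_simps)
    qed
    have gb: "0 \<le> G0 s \<and> (s \<le> 1/2 \<longrightarrow> G0 s \<le> 3 * s^3)" using G0_bound s by simp
    have A: "0 \<le> F1 0 t" unfolding v using gb s by simp
    have "s^2 \<le> 1^2" using s by (intro power_mono) auto
    then have m: "min 1 (t^2) = s^2" unfolding t2' s_def by simp
    have "F1 0 t \<le> 4 * s^2"
    proof (cases "s \<le> 1/2")
      case True
      then have "G0 s / s \<le> 3 * s^3 / s" using gb s by (intro divide_right_mono) auto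
      also have "\<dots> = 3 * s^2" using s by (simp add: power3_eq_cube power2_eq_square)
      finally show ?thesis unfolding v using s by (smt (verit) zero_le_power2)
    next
      case False
      have "F1 0 t = 1 - (1 - s^2)/(2* s) * (ln (1+s) - ln (1-s))"
        unfolding v G0_def using s by (simp add: field_simps)
      also have "\<dots> \<le> 1"
      proof -
        have "0 \<le> 1 - s^2" using \<open>s^2 \<le> 1^2\<close> by simp
        then have "0 \<le> (1 - s^2)/(2* s) * (ln (1+s) - ln (1-s))" using s L_bounds[of s] by simp
        then show ?thesis by simp
      qed
      also have "\<dots> \<le> 4 * s^2"
      proof -
        have "(1/2)^2 \<le> s^2" using False s by (intro power_mono) auto
        then show ?thesis by (simp add: power2_eq_square)
      qed
      finally show ?thesis .
    qed
    then show ?thesis using A m by simp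
  next
    case 4
    define s where "s = \<bar>t\<bar>"
    have s: "1 < s" using 4 s_def by auto
    have "1^2 \<le> s^2" using s by (intro power_mono) auto
    then have m: "min 1 (t^2) = 1" unfolding t2' s_def by simp
    have e: "\<bar>(s+1)/(s-1)\<bar> = (s+1)/(s-1)" using s by simp
    have v: "F1 0 t = 1 + (s^2 - 1)/(2* s) * ln ((s+1)/(s-1))"
      using 4 s e by (simp add: F1_def F1_raw_def s_def field_simps)
    have l0: "0 \<le> ln ((s+1)/(s-1))" using s by simp
    have p: "0 \<le> (s^2 - 1)/(2* s)" using \<open>1^2 \<le> s^2\<close> s by simp
    have A: "0 \<le> F1 0 t" unfolding v using mult_nonneg_nonneg[OF p l0] by linarith
    have "ln ((s+1)/(s-1)) \<le> (s+1)/(s-1) - 1" using s by (intro ln_le_minus_one) auto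
    also have "\<dots> = 2/(s-1)" using s by (simp add: field_simps)
    finally have "(s^2 - 1)/(2* s) * ln ((s+1)/(s-1)) \<le> (s^2 - 1)/(2* s) * (2/(s-1))"
      using p by (intro mult_left_mono) auto
    also have "\<dots> = (s+1)/s" using s by (simp add: field_simps power2_eq_square)
    also have "\<dots> \<le> 2" using s by (simp add: pos_divide_le_eq)
    finally have "F1 0 t \<le> 3" unfolding v by simp
    then show ?thesis using A m by simp
  qed
qed

definition Gs :: "(real \<Rightarrow> real) \<Rightarrow> real \<Rightarrow> real" where
  "Gs f s = f (sqrt s)"

definition sl :: "(real \<Rightarrow> real) \<Rightarrow> real \<Rightarrow> real \<Rightarrow> real" where
  "sl G a b = (G b - G a) / (b - a)"

definition qd :: "(real \<Rightarrow> real) \<Rightarrow> real \<Rightarrow> real" where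
  "qd f s = Inf ((\<lambda>h. sl (Gs f) s (s + h)) ` {0<..})"

lemma V1_basic:
  assumes "f \<in> V1 \<alpha>"
  shows "continuous_on UNIV f" "\<And>x. f (-x) = f x" "f 0 = 1" "\<And>x. 0 \<le> f x" "\<And>x. f x \<le> 1"
    "\<And>x y. 0 \<le> x \<Longrightarrow> x \<le> y \<Longrightarrow> f y \<le> f x" "convex_on {0..} (Gs f)" "\<And>x. 1 - x^2 \<le> f x"
    "\<And>x. f \<bar>x\<bar> = f x"
proof -
  show c: "continuous_on UNIV f" and e: "\<And>x. f (-x) = f x" and f0: "f 0 = 1"
    and m: "\<And>x y. 0 \<le> x \<Longrightarrow> x \<le> y \<Longrightarrow> f y \<le> f x"
    using assms by (auto simp: V1_def V0_def)
  show "convex_on {0..} (Gs f)" using assms by (simp add: V1_def Gs_def[abs_def])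
  show "\<And>x. 1 - x^2 \<le> f x" using assms by (auto simp: V1_def)
  show a: "\<And>x. f \<bar>x\<bar> = f x" using e by (metis abs_of_nonneg abs_of_neg less_le_not_le linorder_linear)
  show "\<And>x. 0 \<le> f x"
  proof -
    fix x have "0 \<le> f \<bar>x\<bar>" using assms by (auto simp: V1_def)
    then show "0 \<le> f x" using a by simp
  qed
  show "\<And>x. f x \<le> 1"
  proof -
    fix x have "f \<bar>x\<bar> \<le> f 0" using m[of 0 "\<bar>x\<bar>"] by simp
    then show "f x \<le> 1" using a f0 by simp
  qed
qed

lemma Gs_props:
  assumes "f \<in> V1 \<alpha>"
  shows "\<And>s. 0 \<le> Gs f s" "\<And>s. Gs f s \<le> 1" "\<And>s. 0 \<le> s \<Longrightarrow> 1 - s \<le> Gs f s" "Gs f 0 = 1"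
    "\<And>s s'. 0 \<le> s \<Longrightarrow> s \<le> s' \<Longrightarrow> Gs f s' \<le> Gs f s" "\<And>x. Gs f (x^2) = f x"
proof -
  note b = V1_basic[OF assms]
  show "\<And>s. 0 \<le> Gs f s" "\<And>s. Gs f s \<le> 1" "Gs f 0 = 1" using b by (auto simp: Gs_def)
  show "\<And>s. 0 \<le> s \<Longrightarrow> 1 - s \<le> Gs f s"
  proof -
    fix s :: real assume "0 \<le> s"
    then have "(sqrt s)^2 = s" by simp
    then show "1 - s \<le> Gs f s" using b(8)[of "sqrt s"] by (simp add: Gs_def)
  qed
  show "\<And>s s'. 0 \<le> s \<Longrightarrow> s \<le> s' \<Longrightarrow> Gs f s' \<le> Gs f s"
    using b(6) by (simp add: Gs_def real_sqrt_le_iff)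
  show "\<And>x. Gs f (x^2) = f x" using b(9) by (simp add: Gs_def)
qed

lemma sl_swap: "(G a - G b) / (a - b) = sl G a b"
  unfolding sl_def by (metis minus_diff_eq minus_divide_divide)

lemma slope_mono:
  assumes G: "convex_on {0..} G" and "0 \<le> a" "a < b" "a \<le> c" "c < d" "b \<le> d"
  shows "sl G a b \<le> sl G c d"
proof -
  have "sl G a b \<le> sl G a d"
  proof (cases "b = d")
    case False
    then have "b < d" using assms by simp
    then have "(G a - G b) / (a - b) \<le> (G a - G d) / (a - d)"
      using convex_on_slope_le(1)[OF G, of a d b] assms by simp
    then show ?thesis by (simp only: sl_swap)
  qed simp
  also have "\<dots> \<le> sl G c d"
  proof (cases "a = c")
    case False
    then have "a < c" using assms by simp
    then have "(G a - G d) / (a - d) \<le> (G c - G d) / (c - d)"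
      using convex_on_slope_le(2)[OF G, of a d c] assms by simp
    then show ?thesis by (simp only: sl_swap)
  qed simp
  finally show ?thesis .
qed


lemma sl_lower:
  assumes "f \<in> V1 \<alpha>" "0 \<le> s" "0 < h"
  shows "-1 \<le> sl (Gs f) s (s+h)"
proof -
  note G = Gs_props[OF assms(1)]
  have "sl (Gs f) 0 (s+h) \<le> sl (Gs f) s (s+h)"
    using slope_mono[OF V1_basic(7)[OF assms(1)], of 0 "s+h" s "s+h"] assms by simp
  moreover have "-1 \<le> sl (Gs f) 0 (s+h)"
  proof -
    have "1 - (s+h) \<le> Gs f (s+h)" using G(3)[of "s+h"] assms by simp
    then have "-(s+h) \<le> Gs f (s+h) - Gs f 0" using G(4) by simp
    then have "-(s+h)/(s+h) \<le> (Gs f (s+h) - Gs f 0)/(s+h)" using assms by (intro divide_right_mono) auto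
    moreover have "-(s+h)/(s+h) = -1"
    proof -
      have "s + h \<noteq> 0" using assms by simp
      then show ?thesis by (simp add: field_simps)
    qed
    ultimately show ?thesis unfolding sl_def using assms by simp
  qed
  ultimately show ?thesis by simp
qed

lemma sl_nonpos:
  assumes "f \<in> V1 \<alpha>" "0 \<le> a" "a < b"
  shows "sl (Gs f) a b \<le> 0"
proof -
  have "Gs f b \<le> Gs f a" using Gs_props(5)[OF assms(1), of a b] assms by simp
  then show ?thesis unfolding sl_def using assms by (simp add: divide_nonpos_pos)
qed

lemma qd_bdd:
  assumes "f \<in> V1 \<alpha>" "0 \<le> s"
  shows "bdd_below ((\<lambda>h. sl (Gs f) s (s + h)) ` {0<..})"
  using sl_lower[OF assms] by (intro bdd_belowI[of _ "-1"]) auto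

lemma qd_le:
  assumes "f \<in> V1 \<alpha>" "0 \<le> s" "0 < h"
  shows "qd f s \<le> sl (Gs f) s (s+h)"
  unfolding qd_def using qd_bdd[OF assms(1,2)] assms(3) by (intro cInf_lower) auto

lemma qd_ge:
  assumes "f \<in> V1 \<alpha>" "0 \<le> u" "u < s"
  shows "sl (Gs f) u s \<le> qd f s"
  unfolding qd_def
proof (rule cInf_greatest)
  show "(\<lambda>h. sl (Gs f) s (s + h)) ` {0<..} \<noteq> {}" by auto
  fix y assume "y \<in> (\<lambda>h. sl (Gs f) s (s + h)) ` {0<..}"
  then obtain h where h: "h > 0" "y = sl (Gs f) s (s + h)" by auto
  show "sl (Gs f) u s \<le> y" unfolding h(2)
    using slope_mono[OF V1_basic(7)[OF assms(1)], of u s s "s+h"] assms h by simp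
qed

lemma qd_ge_m1:
  assumes "f \<in> V1 \<alpha>" "0 \<le> s"
  shows "-1 \<le> qd f s"
  unfolding qd_def using sl_lower[OF assms] by (intro cInf_greatest) auto

lemma qd_le0:
  assumes "f \<in> V1 \<alpha>" "0 \<le> s"
  shows "qd f s \<le> 0"
  using qd_le[OF assms, of 1] sl_nonpos[OF assms(1,2), of "s+1"] by simp

lemma qd_ge_inv:
  assumes "f \<in> V1 \<alpha>" "0 < s"
  shows "-2/s \<le> qd f s"
proof -
  have "sl (Gs f) (s/2) s \<le> qd f s" using qd_ge[OF assms(1), of "s/2" s] assms by simp
  moreover have "-2/s \<le> sl (Gs f) (s/2) s"
  proof -
    have "-1 \<le> Gs f s - Gs f (s/2)" using Gs_props[OF assms(1)] by (smt (verit))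
    then have "-1/(s/2) \<le> (Gs f s - Gs f (s/2))/(s/2)" using assms by (intro divide_right_mono) auto
    moreover have "s - s/2 = s/2" by simp
    ultimately show ?thesis unfolding sl_def using assms by simp
  qed
  ultimately show ?thesis by simp
qed

lemma qd_mono:
  assumes "f \<in> V1 \<alpha>" "0 \<le> u" "u \<le> s"
  shows "qd f u \<le> qd f s"
proof (cases "u = s")
  case False
  then have "u < s" using assms by simp
  have "qd f u \<le> sl (Gs f) u (u + (s - u))" using qd_le[OF assms(1,2), of "s-u"] \<open>u < s\<close> by simp
  also have "\<dots> \<le> qd f s" using qd_ge[OF assms(1,2) \<open>u < s\<close>] by simp
  finally show ?thesis .
qed simp


lemma qd_deriv:
  assumes f: "f \<in> V1 \<alpha>" and s: "0 < s" and c: "isCont (qd f) s"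
  shows "(Gs f has_real_derivative qd f s) (at s)"
  unfolding has_field_derivative_iff
proof (rule tendsto_sandwich[where f="\<lambda>y. min (qd f s) (qd f y)" and h="\<lambda>y. max (qd f s) (qd f y)"])
  have ev: "eventually (\<lambda>y. 0 < y \<and> y \<noteq> s) (at s)"
    unfolding eventually_at using s by (intro exI[of _ s]) (auto simp: dist_real_def)
  show "eventually (\<lambda>y. min (qd f s) (qd f y) \<le> (Gs f y - Gs f s) / (y - s)) (at s)"
    using ev
  proof eventually_elim
    case (elim y)
    show ?case
    proof (cases "y > s")
      case True
      have "qd f s \<le> sl (Gs f) s (s + (y - s))" using qd_le[OF f, of s "y - s"] s True by simp
      then show ?thesis unfolding sl_def by simp
    next
      case False
      then have "y < s" using elim by simp
      have "qd f y \<le> sl (Gs f) y (y + (s - y))" using qd_le[OF f, of y "s - y"] elim \<open>y < s\<close> by simp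
      then have "qd f y \<le> (Gs f y - Gs f s) / (y - s)" unfolding sl_def by (simp add: sl_swap[unfolded sl_def])
      then show ?thesis by simp
    qed
  qed
  show "eventually (\<lambda>y. (Gs f y - Gs f s) / (y - s) \<le> max (qd f s) (qd f y)) (at s)"
    using ev
  proof eventually_elim
    case (elim y)
    show ?case
    proof (cases "y > s")
      case True
      have "sl (Gs f) s y \<le> qd f y" using qd_ge[OF f, of s y] s True by simp
      then show ?thesis unfolding sl_def by simp
    next
      case False
      then have "y < s" using elim by simp
      have "sl (Gs f) y s \<le> qd f s" using qd_ge[OF f, of y s] elim \<open>y < s\<close> by simp
      then have "(Gs f y - Gs f s) / (y - s) \<le> qd f s" unfolding sl_def by (simp add: sl_swap[unfolded sl_def])
      then show ?thesis by simp
    qed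
  qed
  have "(qd f \<longlongrightarrow> qd f s) (at s)" using c by (simp add: isCont_def)
  then show "((\<lambda>y. min (qd f s) (qd f y)) \<longlongrightarrow> qd f s) (at s)"
    and "((\<lambda>y. max (qd f s) (qd f y)) \<longlongrightarrow> qd f s) (at s)"
    by (auto intro!: tendsto_eq_intros)
qed

lemma f_deriv:
  assumes f: "f \<in> V1 \<alpha>" and x: "0 < x" and c: "isCont (qd f) (x^2)"
  shows "(f has_real_derivative 2 * x * qd f (x^2)) (at x)"
proof -
  have "((\<lambda>x. Gs f (x^2)) has_real_derivative qd f (x^2) * (2 * x)) (at x)"
  proof (rule DERIV_chain2[of "Gs f" _ "\<lambda>x. x^2"])
    show "(Gs f has_real_derivative qd f (x^2)) (at (x^2))" using qd_deriv[OF f _ c] x by simp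
    show "((\<lambda>x. x^2) has_real_derivative 2 * x) (at x)" by (auto intro!: derivative_eq_intros)
  qed
  moreover have "(\<lambda>x. Gs f (x^2)) = f" using Gs_props(6)[OF f] by auto
  ultimately show ?thesis by (simp add: mult_ac)
qed

definition Xset :: "(real \<Rightarrow> real) \<Rightarrow> real set" where
  "Xset f = {x. 0 < x \<and> \<not> isCont (qd f) (x^2)}"

lemma Xset_countable:
  assumes f: "f \<in> V1 \<alpha>"
  shows "countable (Xset f)"
proof -
  have m: "mono_on {0<..} (qd f)" using qd_mono[OF f] by (intro mono_onI) auto
  have "countable {a\<in>{0<..}. \<not> isCont (qd f) a}"
    by (rule mono_on_ctble_discont_open[OF _ m]) auto
  then have "countable (sqrt ` {a\<in>{0<..}. \<not> isCont (qd f) a})" by simp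
  moreover have "Xset f \<subseteq> sqrt ` {a\<in>{0<..}. \<not> isCont (qd f) a}"
  proof
    fix x assume "x \<in> Xset f"
    then have x: "0 < x" "\<not> isCont (qd f) (x^2)" by (auto simp: Xset_def)
    then have "x = sqrt (x^2)" by simp
    moreover have "x^2 \<in> {a\<in>{0<..}. \<not> isCont (qd f) a}" using x by simp
    ultimately show "x \<in> sqrt ` {a\<in>{0<..}. \<not> isCont (qd f) a}" by blast
  qed
  ultimately show ?thesis by (rule countable_subset[rotated])
qed

lemma deriv_eq:
  assumes f: "f \<in> V1 \<alpha>" and x: "0 < x" "x \<notin> Xset f"
  shows "deriv f x = 2 * x * qd f (x^2)"
  using f_deriv[OF f x(1)] x by (intro DERIV_imp_deriv) (auto simp: Xset_def)

lemma qd_meas: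
  assumes f: "f \<in> V1 \<alpha>"
  shows "(\<lambda>x. qd f (x^2)) \<in> borel_measurable borel"
proof -
  define qq where "qq s = qd f (max 0 s)" for s
  have "mono qq" unfolding qq_def using qd_mono[OF f] by (intro monoI) auto
  then have m: "qq \<in> borel_measurable borel" by (rule borel_measurable_mono)
  have "(\<lambda>x. qq (x^2)) \<in> borel_measurable borel"
    by (rule measurable_compose[OF _ m]) simp
  moreover have "(\<lambda>x. qq (x^2)) = (\<lambda>x. qd f (x^2))" unfolding qq_def by simp
  ultimately show ?thesis by simp
qed

lemma F1_bound:
  assumes "-1 < c" "c < 1"
  shows "\<exists>C>0. \<forall>t. 0 \<le> F1 c t \<and> F1 c t \<le> C * min 1 (t^2)"
proof (cases "c = 0")
  case True
  then show ?thesis using F1_zero_bound by (intro exI[of _ 4]) auto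
next
  case False
  have "400/(\<bar>c\<bar>*(1+c)) > 0" using assms False by simp
  then show ?thesis using F1_nz_bound[OF assms False] by blast
qed

lemma F1_meas: "F1 c \<in> borel_measurable borel"
  unfolding F1_def[abs_def] F1_raw_def by measurable


definition W :: "real \<Rightarrow> real \<Rightarrow> real" where
  "W \<alpha> x = indicator {0..1} x * x powr (1 - 2*\<alpha>) + indicator {1..} x * x powr (-1 - 2*\<alpha>)"

lemma W_int:
  assumes "0 < \<alpha>" "\<alpha> < 1"
  shows "integrable lborel (W \<alpha>)"
proof -
  have "integrable lebesgue (\<lambda>x. indicator {0..1} x *\<^sub>R x powr (1 - 2*\<alpha>))"
    using assms by (intro nonnegative_absolutely_integrable_1[unfolded set_integrable_def] integrable_on_powr_from_0) auto
  then have i1: "integrable lborel (\<lambda>x. indicator {0..1} x * x powr (1 - 2*\<alpha>))"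
    by (subst (asm) integrable_completion) (auto)
  have "((\<lambda>x. x powr (-1 - 2*\<alpha>)) has_integral -(1 powr (-1 - 2*\<alpha>+1)) / (-1 - 2*\<alpha>+1)) {1..}"
    using assms by (intro has_integral_powr_to_inf) auto
  then have "(\<lambda>x. x powr (-1 - 2*\<alpha>)) integrable_on {1..}" by blast
  then have "integrable lebesgue (\<lambda>x. indicator {1..} x *\<^sub>R x powr (-1 - 2*\<alpha>))"
    by (intro nonnegative_absolutely_integrable_1[unfolded set_integrable_def]) auto
  then have i2: "integrable lborel (\<lambda>x. indicator {1..} x * x powr (-1 - 2*\<alpha>))"
    by (subst (asm) integrable_completion) (auto)
  show ?thesis unfolding W_def[abs_def] using i1 i2 by (rule Bochner_Integration.integrable_add)
qed

lemma W_nonneg: "0 \<le> W \<alpha> x"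
  unfolding W_def by (simp add: indicator_def)

lemma W_ge1: "0 \<le> x \<Longrightarrow> x \<le> 1 \<Longrightarrow> x powr (1 - 2*\<alpha>) \<le> W \<alpha> x"
  unfolding W_def by (simp add: indicator_def)

lemma W_ge2: "1 \<le> x \<Longrightarrow> x powr (-1 - 2*\<alpha>) \<le> W \<alpha> x"
  unfolding W_def by (simp add: indicator_def)

lemma maj1:
  assumes "0 < x"
  shows "min 1 (x^2) / x powr (1 + 2*\<alpha>) \<le> W \<alpha> x"
proof (cases "x \<le> 1")
  case True
  have "x^2 \<le> 1" using True assms by (simp add: power_le_one)
  then have "min 1 (x^2) / x powr (1 + 2*\<alpha>) = x powr 2 / x powr (1 + 2*\<alpha>)" using assms
    by (simp add: powr_realpow)
  also have "\<dots> = x powr (1 - 2*\<alpha>)" by (simp only: powr_diff[symmetric]) (simp add: algebra_simps)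
  also have "\<dots> \<le> W \<alpha> x" using True assms by (intro W_ge1) auto
  finally show ?thesis .
next
  case False
  have "1 \<le> x^2" using False by (simp add: one_le_power)
  then have "min 1 (x^2) / x powr (1 + 2*\<alpha>) = x powr (-(1 + 2*\<alpha>))" using assms
    by (simp add: powr_minus_divide[symmetric])
  also have "\<dots> = x powr (-1 - 2*\<alpha>)" by (rule arg_cong[where f="\<lambda>e. x powr e"]) simp
  also have "\<dots> \<le> W \<alpha> x" using False by (intro W_ge2) auto
  finally show ?thesis .
qed

lemma maj2:
  assumes "0 < x" "0 \<le> m" "m \<le> min (2*x) (4/x)" "0 \<le> M"
  shows "m * x powr (2 - 2*\<alpha>) * min 1 (M^2/x^2) \<le> 4 * (1 + M^2) * W \<alpha> x"
proof (cases "x \<le> 1")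
  case True
  have "m * x powr (2 - 2*\<alpha>) * min 1 (M^2/x^2) \<le> (2*x) * x powr (2 - 2*\<alpha>) * 1"
    using assms by (intro mult_mono) auto
  also have "\<dots> = 2 * x^2 * x powr (1 - 2*\<alpha>)"
  proof -
    have "x powr (2 - 2*\<alpha>) = x powr (1 + (1 - 2*\<alpha>))" by (rule arg_cong[where f="\<lambda>e. x powr e"]) simp
    also have "\<dots> = x powr 1 * x powr (1 - 2*\<alpha>)" by (rule powr_add)
    finally have "x powr (2 - 2*\<alpha>) = x powr 1 * x powr (1 - 2*\<alpha>)" .
    then show ?thesis using assms by (simp add: power2_eq_square)
  qed
  also have "\<dots> \<le> 2 * 1 * x powr (1 - 2*\<alpha>)"
    using True assms by (intro mult_right_mono mult_left_mono) (auto simp: power_le_one)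
  also have "\<dots> \<le> 4 * (1 + M^2) * W \<alpha> x"
  proof -
    have "x powr (1 - 2*\<alpha>) \<le> W \<alpha> x" using True assms by (intro W_ge1) auto
    moreover have "2 \<le> 4 * (1 + M^2)" by (simp add: add_increasing2)
    ultimately show ?thesis using W_nonneg[of \<alpha> x] by (simp add: mult_mono)
  qed
  finally show ?thesis .
next
  case False
  have "m * x powr (2 - 2*\<alpha>) * min 1 (M^2/x^2) \<le> (4/x) * x powr (2 - 2*\<alpha>) * (M^2/x^2)"
    using assms by (intro mult_mono) auto
  also have "\<dots> = 4 * M^2 * x powr (-1 - 2*\<alpha>)"
  proof -
    have "x powr (2 - 2*\<alpha>) = x powr (3 + (-1 - 2*\<alpha>))" by (rule arg_cong[where f="\<lambda>e. x powr e"]) simp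
    also have "\<dots> = x powr 3 * x powr (-1 - 2*\<alpha>)" by (rule powr_add)
    finally have "x powr (2 - 2*\<alpha>) = x powr 3 * x powr (-1 - 2*\<alpha>)" .
    moreover have "x powr 3 = x^3" using assms by simp
    ultimately have e: "x powr (2 - 2*\<alpha>) = x^3 * x powr (-1 - 2*\<alpha>)" by simp
    have "x \<noteq> 0" using assms by simp
    then show ?thesis unfolding e by (simp add: field_simps power2_eq_square power3_eq_cube)
  qed
  also have "\<dots> \<le> 4 * (1 + M^2) * W \<alpha> x"
    using False W_ge2[of x \<alpha>] by (intro mult_mono) auto
  finally show ?thesis .
qed

definition CF :: "real \<Rightarrow> real" where
  "CF \<alpha> = (SOME C. C > 0 \<and> (\<forall>t. 0 \<le> F1 (1 - 2*\<alpha>) t \<and> F1 (1 - 2*\<alpha>) t \<le> C * min 1 (t^2)))"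

lemma CF_prop:
  assumes "0 < \<alpha>" "\<alpha> < 1"
  shows "CF \<alpha> > 0" "\<And>t. 0 \<le> F1 (1 - 2*\<alpha>) t" "\<And>t. F1 (1 - 2*\<alpha>) t \<le> CF \<alpha> * min 1 (t^2)"
proof -
  have "\<exists>C>0. \<forall>t. 0 \<le> F1 (1 - 2*\<alpha>) t \<and> F1 (1 - 2*\<alpha>) t \<le> C * min 1 (t^2)"
    using assms by (intro F1_bound) auto
  then have "CF \<alpha> > 0 \<and> (\<forall>t. 0 \<le> F1 (1 - 2*\<alpha>) t \<and> F1 (1 - 2*\<alpha>) t \<le> CF \<alpha> * min 1 (t^2))"
    unfolding CF_def by (rule someI_ex)
  then show "CF \<alpha> > 0" "\<And>t. 0 \<le> F1 (1 - 2*\<alpha>) t" "\<And>t. F1 (1 - 2*\<alpha>) t \<le> CF \<alpha> * min 1 (t^2)"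
    by auto
qed

definition Dq :: "(real \<Rightarrow> real) \<Rightarrow> real \<Rightarrow> real" where
  "Dq h x = 2 * x * qd h (x^2)"

definition Tint :: "real \<Rightarrow> (real \<Rightarrow> real) \<Rightarrow> real \<Rightarrow> real \<Rightarrow> real" where
  "Tint \<alpha> h x \<xi> = indicator {0<..} \<xi> * (Dq h \<xi> * (\<xi> powr (2 - 2*\<alpha>) * F1 (1 - 2*\<alpha>) (x / \<xi>)))"

lemma Dq_bounds:
  assumes h: "h \<in> V1 \<alpha>" and x: "0 < x"
  shows "Dq h x \<le> 0" "\<bar>Dq h x\<bar> \<le> min (2*x) (4/x)"
proof -
  have q0: "qd h (x^2) \<le> 0" using qd_le0[OF h] by simp
  have q1: "-1 \<le> qd h (x^2)" using qd_ge_m1[OF h] by simp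
  have q2: "-2/x^2 \<le> qd h (x^2)" using qd_ge_inv[OF h, of "x^2"] x by simp
  show "Dq h x \<le> 0" unfolding Dq_def using q0 x by (simp add: mult_nonneg_nonpos)
  have a: "\<bar>Dq h x\<bar> = 2 * x * (- qd h (x^2))" unfolding Dq_def using q0 x by (simp add: abs_mult)
  have "2 * x * (- qd h (x^2)) \<le> 2 * x * 1" using q1 x by (intro mult_left_mono) auto
  moreover have "2 * x * (- qd h (x^2)) \<le> 2 * x * (2/x^2)" using q2 x by (intro mult_left_mono) auto
  moreover have "2 * x * (2/x^2) = 4/x" using x by (simp add: power2_eq_square)
  ultimately show "\<bar>Dq h x\<bar> \<le> min (2*x) (4/x)" unfolding a by simp
qed

lemma Dq_meas:
  assumes h: "h \<in> V1 \<alpha>"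
  shows "Dq h \<in> borel_measurable borel"
  unfolding Dq_def[abs_def] using qd_meas[OF h] by measurable

lemma Tint_meas:
  assumes h: "h \<in> V1 \<alpha>"
  shows "Tint \<alpha> h x \<in> borel_measurable borel"
proof -
  have "(\<lambda>\<xi>. F1 (1 - 2*\<alpha>) (x / \<xi>)) \<in> borel_measurable borel"
    by (rule measurable_compose[OF _ F1_meas]) simp
  then show ?thesis unfolding Tint_def[abs_def] using Dq_meas[OF h] by measurable
qed

lemma Tint_bound:
  assumes a: "0 < \<alpha>" "\<alpha> < 1" and h: "h \<in> V1 \<alpha>" and xM: "\<bar>x\<bar> \<le> M"
  shows "\<bar>Tint \<alpha> h x \<xi>\<bar> \<le> CF \<alpha> * (4 * (1 + M^2) * W \<alpha> \<xi>)"
proof (cases "\<xi> > 0")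
  case False
  then show ?thesis unfolding Tint_def using CF_prop[OF a] W_nonneg[of \<alpha> \<xi>] by simp
next
  case True
  note cf = CF_prop[OF a]
  have M0: "0 \<le> M" using xM by simp
  have Fb: "F1 (1 - 2*\<alpha>) (x / \<xi>) \<le> CF \<alpha> * min 1 (M^2/\<xi>^2)"
  proof -
    have "x^2 = \<bar>x\<bar>^2" by simp
    also have "\<dots> \<le> M^2" using xM by (intro power_mono) auto
    finally have "x^2 / \<xi>^2 \<le> M^2/\<xi>^2" by (intro divide_right_mono) auto
    then have "(x/\<xi>)^2 \<le> M^2/\<xi>^2" by (simp add: power_divide)
    then have "min 1 ((x/\<xi>)^2) \<le> min 1 (M^2/\<xi>^2)" by simp
    then show ?thesis using cf(3)[of "x/\<xi>"] cf(1) by (smt (verit) mult_left_mono)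
  qed
  have "\<bar>Tint \<alpha> h x \<xi>\<bar> = \<bar>Dq h \<xi>\<bar> * \<xi> powr (2 - 2*\<alpha>) * F1 (1 - 2*\<alpha>) (x / \<xi>)"
    unfolding Tint_def using True cf(2) by (simp add: abs_mult)
  also have "\<dots> \<le> \<bar>Dq h \<xi>\<bar> * \<xi> powr (2 - 2*\<alpha>) * (CF \<alpha> * min 1 (M^2/\<xi>^2))"
    using Fb by (intro mult_left_mono) auto
  also have "\<dots> = CF \<alpha> * (\<bar>Dq h \<xi>\<bar> * \<xi> powr (2 - 2*\<alpha>) * min 1 (M^2/\<xi>^2))" by simp
  also have "\<dots> \<le> CF \<alpha> * (4 * (1 + M^2) * W \<alpha> \<xi>)"
    using maj2[OF True _ Dq_bounds(2)[OF h True] M0, of \<alpha>] cf(1) by (intro mult_left_mono) auto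
  finally show ?thesis .
qed

lemma Tint_int:
  assumes a: "0 < \<alpha>" "\<alpha> < 1" and h: "h \<in> V1 \<alpha>"
  shows "integrable lborel (Tint \<alpha> h x)"
proof (rule Bochner_Integration.integrable_bound)
  show "Tint \<alpha> h x \<in> borel_measurable lborel" using Tint_meas[OF h] by simp
  show "integrable lborel (\<lambda>\<xi>. CF \<alpha> * (4 * (1 + \<bar>x\<bar>^2) * W \<alpha> \<xi>))"
    using W_int[OF a] by simp
  show "AE \<xi> in lborel. norm (Tint \<alpha> h x \<xi>) \<le> norm (CF \<alpha> * (4 * (1 + \<bar>x\<bar>^2) * W \<alpha> \<xi>))"
    using Tint_bound[OF a h, of x "\<bar>x\<bar>"] CF_prop(1)[OF a] W_nonneg[of \<alpha>] by (intro AE_I2) simp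
qed


lemma c1_pos:
  assumes "0 < \<alpha>" "\<alpha> < 1"
  shows "c1 \<alpha> > 0"
proof -
  have "Gamma (1/2 + \<alpha>) > 0" "Gamma (1 - \<alpha>) > 0" using assms by (auto intro!: Gamma_real_pos)
  then show ?thesis unfolding c1_def by simp
qed

lemma T_rep:
  assumes h: "h \<in> V1 \<alpha>"
  shows "T_op \<alpha> h x = c1 \<alpha> * integral\<^sup>L lborel (Tint \<alpha> h x)"
proof -
  have "integral\<^sup>L lborel (\<lambda>\<xi>. indicator {0<..} \<xi> *\<^sub>R (deriv h \<xi> * \<xi> powr (2 - 2*\<alpha>) * F1 (1 - 2*\<alpha>) (x / \<xi>)))
      = integral\<^sup>L lborel (Tint \<alpha> h x)"
  proof (rule integral_discrete_difference[OF Xset_countable[OF h]])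
    fix \<xi> assume "\<xi> \<notin> Xset h"
    then show "indicator {0<..} \<xi> *\<^sub>R (deriv h \<xi> * \<xi> powr (2 - 2*\<alpha>) * F1 (1 - 2*\<alpha>) (x / \<xi>)) = Tint \<alpha> h x \<xi>"
      unfolding Tint_def using deriv_eq[OF h, of \<xi>] by (cases "\<xi> > 0") (auto simp: Dq_def)
  qed auto
  then show ?thesis unfolding T_op_def set_lebesgue_integral_def by simp
qed

lemma Tint_nonpos:
  assumes a: "0 < \<alpha>" "\<alpha> < 1" and h: "h \<in> V1 \<alpha>"
  shows "Tint \<alpha> h x \<xi> \<le> 0"
proof (cases "\<xi> > 0")
  case True
  have "0 \<le> \<xi> powr (2 - 2*\<alpha>) * F1 (1 - 2*\<alpha>) (x / \<xi>)" using CF_prop(2)[OF a] by simp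
  then show ?thesis unfolding Tint_def using True Dq_bounds(1)[OF h True] by (simp add: mult_nonpos_nonneg)
qed (simp add: Tint_def)

lemma T_nonpos:
  assumes a: "0 < \<alpha>" "\<alpha> < 1" and h: "h \<in> V1 \<alpha>"
  shows "T_op \<alpha> h x \<le> 0"
proof -
  have "integral\<^sup>L lborel (Tint \<alpha> h x) \<le> integral\<^sup>L lborel (\<lambda>_::real. 0::real)"
    using Tint_int[OF a h] Tint_nonpos[OF a h] by (intro Bochner_Integration.integral_mono) auto
  then show ?thesis unfolding T_rep[OF h] using c1_pos[OF a] by (simp add: mult_nonneg_nonpos)
qed

definition Eint :: "real \<Rightarrow> (real \<Rightarrow> real) \<Rightarrow> (real \<Rightarrow> real) \<Rightarrow> real \<Rightarrow> real \<Rightarrow> real" where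
  "Eint \<alpha> g f M \<xi> = indicator {0<..} \<xi> * (\<bar>Dq g \<xi> - Dq f \<xi>\<bar> * \<xi> powr (2 - 2*\<alpha>) * min 1 (M^2/\<xi>^2))"

lemma Eint_bound:
  assumes a: "0 < \<alpha>" "\<alpha> < 1" and g: "g \<in> V1 \<alpha>" and f: "f \<in> V1 \<alpha>" and M: "0 \<le> M"
  shows "\<bar>Eint \<alpha> g f M \<xi>\<bar> \<le> 2 * (4 * (1 + M^2) * W \<alpha> \<xi>)"
proof (cases "\<xi> > 0")
  case False
  then show ?thesis unfolding Eint_def using W_nonneg[of \<alpha> \<xi>] by simp
next
  case True
  define P where "P = \<xi> powr (2 - 2*\<alpha>) * min 1 (M^2/\<xi>^2)"
  have P0: "0 \<le> P" unfolding P_def by simp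
  have "\<bar>Eint \<alpha> g f M \<xi>\<bar> = \<bar>Dq g \<xi> - Dq f \<xi>\<bar> * P" unfolding Eint_def P_def using True by (simp add: abs_mult)
  also have "\<dots> \<le> (\<bar>Dq g \<xi>\<bar> + \<bar>Dq f \<xi>\<bar>) * P" using P0 by (intro mult_right_mono) auto
  also have "\<dots> = \<bar>Dq g \<xi>\<bar> * P + \<bar>Dq f \<xi>\<bar> * P" by (simp add: algebra_simps)
  also have "\<dots> \<le> 4 * (1 + M^2) * W \<alpha> \<xi> + 4 * (1 + M^2) * W \<alpha> \<xi>"
    using maj2[OF True _ Dq_bounds(2)[OF g True] M, of \<alpha>] maj2[OF True _ Dq_bounds(2)[OF f True] M, of \<alpha>]
    unfolding P_def by (intro add_mono) (auto simp: mult.assoc)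
  finally show ?thesis by (simp add: mult_ac)
qed

lemma Eint_meas:
  assumes g: "g \<in> V1 \<alpha>" and f: "f \<in> V1 \<alpha>"
  shows "Eint \<alpha> g f M \<in> borel_measurable borel"
  unfolding Eint_def[abs_def] using Dq_meas[OF g] Dq_meas[OF f] by measurable

lemma Eint_int:
  assumes a: "0 < \<alpha>" "\<alpha> < 1" and g: "g \<in> V1 \<alpha>" and f: "f \<in> V1 \<alpha>" and M: "0 \<le> M"
  shows "integrable lborel (Eint \<alpha> g f M)"
proof (rule Bochner_Integration.integrable_bound)
  show "Eint \<alpha> g f M \<in> borel_measurable lborel" using Eint_meas[OF g f] by simp
  show "integrable lborel (\<lambda>\<xi>. 2 * (4 * (1 + M^2) * W \<alpha> \<xi>))"
    using W_int[OF a] by simp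
  show "AE \<xi> in lborel. norm (Eint \<alpha> g f M \<xi>) \<le> norm (2 * (4 * (1 + M^2) * W \<alpha> \<xi>))"
    using Eint_bound[OF a g f M] W_nonneg[of \<alpha>] by (intro AE_I2) simp
qed

lemma T_diff:
  assumes a: "0 < \<alpha>" "\<alpha> < 1" and g: "g \<in> V1 \<alpha>" and f: "f \<in> V1 \<alpha>" and xM: "\<bar>x\<bar> \<le> M"
  shows "\<bar>T_op \<alpha> g x - T_op \<alpha> f x\<bar> \<le> c1 \<alpha> * (CF \<alpha> * integral\<^sup>L lborel (Eint \<alpha> g f M))"
proof -
  have M: "0 \<le> M" using xM by simp
  note ig = Tint_int[OF a g, of x] and iff = Tint_int[OF a f, of x]
  have "T_op \<alpha> g x - T_op \<alpha> f x = c1 \<alpha> * integral\<^sup>L lborel (\<lambda>\<xi>. Tint \<alpha> g x \<xi> - Tint \<alpha> f x \<xi>)"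
    unfolding T_rep[OF g] T_rep[OF f] using ig iff by (simp add: right_diff_distrib)
  then have "\<bar>T_op \<alpha> g x - T_op \<alpha> f x\<bar> = c1 \<alpha> * \<bar>integral\<^sup>L lborel (\<lambda>\<xi>. Tint \<alpha> g x \<xi> - Tint \<alpha> f x \<xi>)\<bar>"
    using c1_pos[OF a] by (simp add: abs_mult)
  also have "\<dots> \<le> c1 \<alpha> * integral\<^sup>L lborel (\<lambda>\<xi>. \<bar>Tint \<alpha> g x \<xi> - Tint \<alpha> f x \<xi>\<bar>)"
    using c1_pos[OF a] by (intro mult_left_mono integral_abs_bound) auto
  also have "\<dots> \<le> c1 \<alpha> * integral\<^sup>L lborel (\<lambda>\<xi>. CF \<alpha> * Eint \<alpha> g f M \<xi>)"
  proof (intro mult_left_mono Bochner_Integration.integral_mono)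
    show "integrable lborel (\<lambda>\<xi>. \<bar>Tint \<alpha> g x \<xi> - Tint \<alpha> f x \<xi>\<bar>)" using ig iff by auto
    show "integrable lborel (\<lambda>\<xi>. CF \<alpha> * Eint \<alpha> g f M \<xi>)" using Eint_int[OF a g f M] by simp
    show "0 \<le> c1 \<alpha>" using c1_pos[OF a] by simp
    fix \<xi>
    show "\<bar>Tint \<alpha> g x \<xi> - Tint \<alpha> f x \<xi>\<bar> \<le> CF \<alpha> * Eint \<alpha> g f M \<xi>"
    proof (cases "\<xi> > 0")
      case False then show ?thesis unfolding Tint_def Eint_def by simp
    next
      case True
      note cf = CF_prop[OF a]
      have Fb: "F1 (1 - 2*\<alpha>) (x / \<xi>) \<le> CF \<alpha> * min 1 (M^2/\<xi>^2)"
      proof -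
        have "x^2 = \<bar>x\<bar>^2" by simp
        also have "\<dots> \<le> M^2" using xM by (intro power_mono) auto
        finally have "x^2 / \<xi>^2 \<le> M^2/\<xi>^2" by (intro divide_right_mono) auto
        then have "(x/\<xi>)^2 \<le> M^2/\<xi>^2" by (simp add: power_divide)
        then have "min 1 ((x/\<xi>)^2) \<le> min 1 (M^2/\<xi>^2)" by simp
        then show ?thesis using cf(3)[of "x/\<xi>"] cf(1) by (smt (verit) mult_left_mono)
      qed
      have "\<bar>Tint \<alpha> g x \<xi> - Tint \<alpha> f x \<xi>\<bar> = \<bar>Dq g \<xi> - Dq f \<xi>\<bar> * \<xi> powr (2 - 2*\<alpha>) * F1 (1 - 2*\<alpha>) (x / \<xi>)"
        unfolding Tint_def using True cf(2)[of "x/\<xi>"] by (simp add: abs_mult left_diff_distrib[symmetric])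
      also have "\<dots> \<le> \<bar>Dq g \<xi> - Dq f \<xi>\<bar> * \<xi> powr (2 - 2*\<alpha>) * (CF \<alpha> * min 1 (M^2/\<xi>^2))"
        using Fb by (intro mult_left_mono) auto
      also have "\<dots> = CF \<alpha> * Eint \<alpha> g f M \<xi>" unfolding Eint_def using True by simp
      finally show ?thesis .
    qed
  qed
  also have "\<dots> = c1 \<alpha> * (CF \<alpha> * integral\<^sup>L lborel (Eint \<alpha> g f M))" by simp
  finally show ?thesis .
qed

lemma T_absbound:
  assumes a: "0 < \<alpha>" "\<alpha> < 1" and f: "f \<in> V1 \<alpha>" and xM: "\<bar>x\<bar> \<le> M"
  shows "\<bar>T_op \<alpha> f x\<bar> \<le> c1 \<alpha> * (CF \<alpha> * (4 * (1 + M^2) * integral\<^sup>L lborel (W \<alpha>)))"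
proof -
  have "\<bar>T_op \<alpha> f x\<bar> = c1 \<alpha> * \<bar>integral\<^sup>L lborel (Tint \<alpha> f x)\<bar>"
    unfolding T_rep[OF f] using c1_pos[OF a] by (simp add: abs_mult)
  also have "\<dots> \<le> c1 \<alpha> * integral\<^sup>L lborel (\<lambda>\<xi>. \<bar>Tint \<alpha> f x \<xi>\<bar>)"
    using c1_pos[OF a] by (intro mult_left_mono integral_abs_bound) auto
  also have "\<dots> \<le> c1 \<alpha> * integral\<^sup>L lborel (\<lambda>\<xi>. CF \<alpha> * (4 * (1 + M^2) * W \<alpha> \<xi>))"
    using c1_pos[OF a] Tint_int[OF a f, of x] W_int[OF a] Tint_bound[OF a f xM]
    by (intro mult_left_mono Bochner_Integration.integral_mono) auto
  also have "\<dots> = c1 \<alpha> * (CF \<alpha> * (4 * (1 + M^2) * integral\<^sup>L lborel (W \<alpha>)))" by simp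
  finally show ?thesis .
qed

lemma Gs_conv:
  assumes "\<And>x. (\<lambda>n. g n x) \<longlonglongrightarrow> f x"
  shows "(\<lambda>n. Gs (g n) y) \<longlonglongrightarrow> Gs f y"
  unfolding Gs_def using assms .

lemma sl_conv:
  assumes "\<And>x. (\<lambda>n. g n x) \<longlonglongrightarrow> f x"
  shows "(\<lambda>n. sl (Gs (g n)) a b) \<longlonglongrightarrow> sl (Gs f) a b"
  unfolding sl_def divide_inverse by (intro tendsto_mult_right tendsto_diff Gs_conv assms)

lemma qd_conv:
  assumes f: "f \<in> V1 \<alpha>" and g: "\<And>n. g n \<in> V1 \<alpha>" and conv: "\<And>x. (\<lambda>n. g n x) \<longlonglongrightarrow> f x"
    and s: "0 < s" and c: "isCont (qd f) s"
  shows "(\<lambda>n. qd (g n) s) \<longlonglongrightarrow> qd f s"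
proof (rule order_tendstoI)
  have lim: "(qd f \<longlongrightarrow> qd f s) (at s)" using c by (simp add: isCont_def)
  fix a assume a: "qd f s < a"
  have "eventually (\<lambda>y. qd f y < a) (at s)" using order_tendstoD(2)[OF lim a] .
  then obtain d where d: "d > 0" "\<And>y. y \<noteq> s \<Longrightarrow> dist y s < d \<Longrightarrow> qd f y < a"
    unfolding eventually_at by auto
  define h where "h = d/2"
  have h: "h > 0" "qd f (s+h) < a" using d unfolding h_def by (auto simp: dist_real_def)
  have "sl (Gs f) s (s+h) \<le> qd f (s+h)" using qd_ge[OF f, of s "s+h"] s h by simp
  then have "sl (Gs f) s (s+h) < a" using h by simp
  then have "eventually (\<lambda>n. sl (Gs (g n)) s (s+h) < a) sequentially"
    using order_tendstoD(2)[OF sl_conv[of g f, OF conv]] by blast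
  then show "eventually (\<lambda>n. qd (g n) s < a) sequentially"
  proof eventually_elim
    case (elim n)
    then show ?case using qd_le[OF g[of n], of s h] s h by linarith
  qed
next
  have lim: "(qd f \<longlongrightarrow> qd f s) (at s)" using c by (simp add: isCont_def)
  fix a assume a: "a < qd f s"
  have "eventually (\<lambda>y. a < qd f y) (at s)" using order_tendstoD(1)[OF lim a] .
  then obtain d where d: "d > 0" "\<And>y. y \<noteq> s \<Longrightarrow> dist y s < d \<Longrightarrow> a < qd f y"
    unfolding eventually_at by auto
  define h where "h = min (d/2) (s/2)"
  have h: "h > 0" "h < s" "a < qd f (s-h)" using d s unfolding h_def by (auto simp: dist_real_def)
  have "qd f (s-h) \<le> sl (Gs f) (s-h) ((s-h)+h)" using qd_le[OF f, of "s-h" h] h by simp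
  then have "a < sl (Gs f) (s-h) s" using h by simp
  then have "eventually (\<lambda>n. a < sl (Gs (g n)) (s-h) s) sequentially"
    using order_tendstoD(1)[OF sl_conv[of g f, OF conv]] by blast
  then show "eventually (\<lambda>n. a < qd (g n) s) sequentially"
  proof eventually_elim
    case (elim n)
    then show ?case using qd_ge[OF g[of n], of "s-h" s] h by linarith
  qed
qed

lemma Eint_conv:
  assumes a: "0 < \<alpha>" "\<alpha> < 1" and f: "f \<in> V1 \<alpha>" and g: "\<And>n. g n \<in> V1 \<alpha>"
    and conv: "\<And>x. (\<lambda>n. g n x) \<longlonglongrightarrow> f x" and M: "0 \<le> M"
  shows "(\<lambda>n. integral\<^sup>L lborel (Eint \<alpha> (g n) f M)) \<longlonglongrightarrow> 0"
proof -
  have "(\<lambda>n. integral\<^sup>L lborel (Eint \<alpha> (g n) f M)) \<longlonglongrightarrow> integral\<^sup>L lborel (\<lambda>_::real. 0::real)"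
  proof (rule integral_dominated_convergence[where w="\<lambda>\<xi>. 2 * (4 * (1 + M^2) * W \<alpha> \<xi>)"])
    show "(\<lambda>_::real. 0::real) \<in> borel_measurable lborel" by simp
    show "\<And>n. Eint \<alpha> (g n) f M \<in> borel_measurable lborel" using Eint_meas[OF g f] by simp
    show "integrable lborel (\<lambda>\<xi>. 2 * (4 * (1 + M^2) * W \<alpha> \<xi>))" using W_int[OF a] by simp
    show "\<And>n. AE \<xi> in lborel. norm (Eint \<alpha> (g n) f M \<xi>) \<le> 2 * (4 * (1 + M^2) * W \<alpha> \<xi>)"
      using Eint_bound[OF a g f M] by (intro AE_I2) simp
    have "AE \<xi> in lborel. \<xi> \<notin> Xset f"
      by (rule AE_discrete_difference[OF Xset_countable[OF f]]) auto
    then show "AE \<xi> in lborel. (\<lambda>n. Eint \<alpha> (g n) f M \<xi>) \<longlonglongrightarrow> 0"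
    proof eventually_elim
      case (elim \<xi>)
      show ?case
      proof (cases "\<xi> > 0")
        case False then show ?thesis unfolding Eint_def by simp
      next
        case True
        then have c: "isCont (qd f) (\<xi>^2)" using elim by (auto simp: Xset_def)
        have "(\<lambda>n. qd (g n) (\<xi>^2)) \<longlonglongrightarrow> qd f (\<xi>^2)"
          using qd_conv[OF f g conv _ c] True by simp
        then have D: "(\<lambda>n. Dq (g n) \<xi>) \<longlonglongrightarrow> Dq f \<xi>" unfolding Dq_def by (intro tendsto_intros)
        have "(\<lambda>n. indicator {0<..} \<xi> * (\<bar>Dq (g n) \<xi> - Dq f \<xi>\<bar> * \<xi> powr (2 - 2*\<alpha>) * min 1 (M^2/\<xi>^2)))
            \<longlonglongrightarrow> indicator {0<..} \<xi> * (\<bar>Dq f \<xi> - Dq f \<xi>\<bar> * \<xi> powr (2 - 2*\<alpha>) * min 1 (M^2/\<xi>^2))"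
          by (intro tendsto_intros D)
        then show ?thesis unfolding Eint_def by simp
      qed
    qed
  qed
  then show ?thesis by simp
qed


definition Cint :: "real \<Rightarrow> (real \<Rightarrow> real) \<Rightarrow> real \<Rightarrow> real" where
  "Cint \<alpha> h \<xi> = indicator {0<..} \<xi> *\<^sub>R ((1 - h \<xi>) / \<xi> powr (1 + 2*\<alpha>))"

lemma cf_rep: "c_f \<alpha> h = (2*\<alpha>*(1 + 2*\<alpha>)/3) * c1 \<alpha> * integral\<^sup>L lborel (Cint \<alpha> h)"
  unfolding c_f_def set_lebesgue_integral_def Cint_def[abs_def] ..

lemma Cint_meas:
  assumes h: "h \<in> V1 \<alpha>"
  shows "Cint \<alpha> h \<in> borel_measurable borel"
proof -
  have "h \<in> borel_measurable borel" using V1_basic(1)[OF h] by (rule borel_measurable_continuous_onI)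
  then show ?thesis unfolding Cint_def[abs_def] by measurable
qed

lemma Cint_bound:
  assumes h: "h \<in> V1 \<alpha>"
  shows "0 \<le> Cint \<alpha> h \<xi> \<and> Cint \<alpha> h \<xi> \<le> W \<alpha> \<xi>"
proof (cases "\<xi> > 0")
  case False then show ?thesis unfolding Cint_def using W_nonneg[of \<alpha> \<xi>] by simp
next
  case True
  note b = V1_basic[OF h]
  have "0 \<le> 1 - h \<xi>" using b(5)[of \<xi>] by simp
  moreover have "1 - h \<xi> \<le> min 1 (\<xi>^2)" using b(4)[of \<xi>] b(8)[of \<xi>] by simp
  ultimately have "0 \<le> (1 - h \<xi>) / \<xi> powr (1 + 2*\<alpha>) \<and> (1 - h \<xi>) / \<xi> powr (1 + 2*\<alpha>) \<le> min 1 (\<xi>^2) / \<xi> powr (1 + 2*\<alpha>)"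
    using True by (auto intro: divide_right_mono)
  then show ?thesis unfolding Cint_def using True maj1[OF True, of \<alpha>] by simp
qed

lemma Cint_int:
  assumes a: "0 < \<alpha>" "\<alpha> < 1" and h: "h \<in> V1 \<alpha>"
  shows "integrable lborel (Cint \<alpha> h)"
proof (rule Bochner_Integration.integrable_bound)
  show "Cint \<alpha> h \<in> borel_measurable lborel" using Cint_meas[OF h] by simp
  show "integrable lborel (W \<alpha>)" using W_int[OF a] .
  show "AE \<xi> in lborel. norm (Cint \<alpha> h \<xi>) \<le> norm (W \<alpha> \<xi>)"
    using Cint_bound[OF h] W_nonneg[of \<alpha>] by (intro AE_I2) auto
qed

lemma cf_conv:
  assumes a: "0 < \<alpha>" "\<alpha> < 1" and f: "f \<in> V1 \<alpha>" and g: "\<And>n. g n \<in> V1 \<alpha>"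
    and conv: "\<And>x. (\<lambda>n. g n x) \<longlonglongrightarrow> f x"
  shows "(\<lambda>n. c_f \<alpha> (g n)) \<longlonglongrightarrow> c_f \<alpha> f"
proof -
  have "(\<lambda>n. integral\<^sup>L lborel (Cint \<alpha> (g n))) \<longlonglongrightarrow> integral\<^sup>L lborel (Cint \<alpha> f)"
  proof (rule integral_dominated_convergence[where w="W \<alpha>"])
    show "Cint \<alpha> f \<in> borel_measurable lborel" using Cint_meas[OF f] by simp
    show "\<And>n. Cint \<alpha> (g n) \<in> borel_measurable lborel" using Cint_meas[OF g] by simp
    show "integrable lborel (W \<alpha>)" using W_int[OF a] .
    show "\<And>n. AE \<xi> in lborel. norm (Cint \<alpha> (g n) \<xi>) \<le> W \<alpha> \<xi>"
      using Cint_bound[OF g] by (intro AE_I2) auto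
    show "AE \<xi> in lborel. (\<lambda>n. Cint \<alpha> (g n) \<xi>) \<longlonglongrightarrow> Cint \<alpha> f \<xi>"
      unfolding Cint_def divide_inverse real_scaleR_def
      by (intro AE_I2 tendsto_mult_left tendsto_mult_right tendsto_diff tendsto_const conv)
  qed
  then show ?thesis unfolding cf_rep by (intro tendsto_intros)
qed

lemma eta_pos:
  assumes "0 < \<alpha>" "\<alpha> < 1"
  shows "eta \<alpha> > 0"
proof -
  have p: "(4::real) powr \<alpha> > 0" by simp
  have "3 - 2*\<alpha> > 0" "5 - 2*\<alpha> > 0" using assms by auto
  moreover have "1 + 4 powr \<alpha> > 0" using p by linarith
  ultimately have "3 - 2*\<alpha> > 0" "5 - 2*\<alpha> > 0" "1 + 4 powr \<alpha> > 0" by auto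
  then have B: "3 / (2*(3 - 2*\<alpha>)*(5 - 2*\<alpha>)*(1 + 4 powr \<alpha>)) > 0" by simp
  have "(3 / (2*(3 - 2*\<alpha>)*(5 - 2*\<alpha>)*(1 + 4 powr \<alpha>))) powr (1 / min \<alpha> (1 - \<alpha>)) > 0"
    using powr_gt_zero[THEN iffD2, OF less_imp_neq[OF B, THEN not_sym]] .
  then show ?thesis unfolding eta_def by (simp only: mult_pos_pos zero_less_numeral)
qed

lemma f_half:
  assumes a: "0 < \<alpha>" "\<alpha> < 1" and f: "f \<in> V1 \<alpha>"
  shows "f (1/2) < 1"
proof (rule ccontr)
  assume "\<not> f (1/2) < 1"
  then have h1: "f (1/2) = 1" using V1_basic(5)[OF f, of "1/2"] by simp
  obtain L where L: "((\<lambda>x. (f x - f (1/2)) / (x - 1/2)) \<longlongrightarrow> L) (at_left (1/2))" "L \<le> - eta \<alpha>"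
    using f unfolding V1_def by blast
  have ev: "eventually (\<lambda>x. (f x - f (1/2)) / (x - 1/2) = 0) (at_left (1/2::real))"
  proof -
    have "eventually (\<lambda>x. x \<in> {0<..<1/2}) (at_left (1/2::real))"
      by (rule eventually_at_left_real) simp
    then show ?thesis
    proof eventually_elim
      case (elim x)
      have "x \<noteq> 1/2" using elim by simp
      have "f (1/2) \<le> f x" using V1_basic(6)[OF f, of x "1/2"] elim by simp
      then have "f x = 1" using h1 V1_basic(5)[OF f, of x] by simp
      then show ?case using h1 by simp
    qed
  qed
  have "((\<lambda>x. (f x - f (1/2)) / (x - 1/2)) \<longlongrightarrow> 0) (at_left (1/2))"
    using tendsto_eventually[OF ev] .
  then have "L = 0" using L(1) tendsto_unique[OF trivial_limit_at_left_real] by blast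
  then show False using L(2) eta_pos[OF a] by simp
qed

lemma cf_pos:
  assumes a: "0 < \<alpha>" "\<alpha> < 1" and f: "f \<in> V1 \<alpha>"
  shows "c_f \<alpha> f > 0"
proof -
  define d where "d = 1 - f (1/2)"
  have d: "d > 0" using f_half[OF a f] d_def by simp
  have i1: "integrable lborel (\<lambda>\<xi>. indicator {1/2..1::real} \<xi> * d)"
  proof (intro integrable_mult_left integrable_real_indicator)
    have "emeasure lborel {1/2..1::real} = ennreal (1/2)" by simp
    then show "emeasure lborel {1/2..1::real} < \<infinity>" using ennreal_less_top[of "1/2"] by simp
  qed auto
  have "integral\<^sup>L lborel (\<lambda>\<xi>. indicator {1/2..1::real} \<xi> * d) \<le> integral\<^sup>L lborel (Cint \<alpha> f)"
  proof (rule Bochner_Integration.integral_mono[OF i1 Cint_int[OF a f]])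
    fix \<xi> :: real
    show "indicator {1/2..1} \<xi> * d \<le> Cint \<alpha> f \<xi>"
    proof (cases "\<xi> \<in> {1/2..1}")
      case False then show ?thesis using Cint_bound[OF f, of \<xi>] by simp
    next
      case True
      then have \<xi>: "1/2 \<le> \<xi>" "\<xi> \<le> 1" by auto
      have fx: "f \<xi> \<le> f (1/2)" using V1_basic(6)[OF f, of "1/2" \<xi>] \<xi> by simp
      have P: "0 < \<xi> powr (1 + 2*\<alpha>)" "\<xi> powr (1 + 2*\<alpha>) \<le> 1" using \<xi> a by (auto intro: powr_le1)
      have n: "0 \<le> 1 - f \<xi>" using V1_basic(5)[OF f, of \<xi>] by simp
      have "d \<le> 1 - f \<xi>" using fx d_def by simp
      also have "\<dots> \<le> (1 - f \<xi>) / \<xi> powr (1 + 2*\<alpha>)"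
      proof -
        have "(1 - f \<xi>) * \<xi> powr (1 + 2*\<alpha>) \<le> (1 - f \<xi>) * 1" using P n by (intro mult_left_mono) auto
        then show ?thesis using P by (simp add: le_divide_eq)
      qed
      finally show ?thesis using True \<xi> unfolding Cint_def by simp
    qed
  qed
  moreover have "integral\<^sup>L lborel (\<lambda>\<xi>. indicator {1/2..1::real} \<xi> * d) = d / 2"
    by simp
  ultimately have "0 < integral\<^sup>L lborel (Cint \<alpha> f)" using d by simp
  moreover have "0 < (2*\<alpha>*(1 + 2*\<alpha>)/3) * c1 \<alpha>" using a c1_pos[OF a] by simp
  ultimately show ?thesis unfolding cf_rep by simp
qed

lemma R_bounds:
  assumes a: "0 < \<alpha>" "\<alpha> < 1" and f: "f \<in> V1 \<alpha>"
  shows "0 \<le> R_op \<alpha> f x" "R_op \<alpha> f x \<le> 1"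
proof -
  have "T_op \<alpha> f x / c_f \<alpha> f \<le> 0" using T_nonpos[OF a f] cf_pos[OF a f] by (simp add: divide_nonpos_pos)
  then show "0 \<le> R_op \<alpha> f x" "R_op \<alpha> f x \<le> 1" unfolding R_op_def by auto
qed

lemma max_lip: "\<bar>max 0 (1 + a) - max 0 (1 + b)\<bar> \<le> \<bar>a - b\<bar>" for a b :: real
  by (auto simp: max_def abs_if)

lemma rho_pos: "0 < rho \<alpha> x" unfolding rho_def by simp

lemma rho_le1: "0 \<le> \<alpha> \<Longrightarrow> rho \<alpha> x \<le> 1"
  unfolding rho_def by (simp add: powr_minus_divide ge_one_powr_ge_zero)

lemma wnorm_point:
  assumes "0 \<le> \<alpha>" "\<And>x. \<bar>h x\<bar> \<le> B"
  shows "\<bar>rho \<alpha> x * h x\<bar> \<le> wnorm \<alpha> h"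
  unfolding wnorm_def
proof (rule cSUP_upper)
  show "bdd_above (range (\<lambda>x. \<bar>rho \<alpha> x * h x\<bar>))"
  proof (rule bdd_aboveI2)
    fix y
    have "\<bar>rho \<alpha> y * h y\<bar> = rho \<alpha> y * \<bar>h y\<bar>" using rho_pos[of \<alpha> y] by (simp add: abs_mult)
    also have "\<dots> \<le> 1 * B" using rho_le1[OF assms(1)] rho_pos[of \<alpha> y] assms(2)[of y]
      by (intro mult_mono) auto
    finally show "\<bar>rho \<alpha> y * h y\<bar> \<le> B" by simp
  qed
qed simp

lemma wnorm_le:
  assumes "\<And>x. \<bar>rho \<alpha> x * h x\<bar> \<le> b"
  shows "wnorm \<alpha> h \<le> b"
  unfolding wnorm_def using assms by (intro cSUP_least) auto

theorem mainTheorem7: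
  fixes \<alpha> :: real
  assumes "0 < \<alpha>" and "\<alpha> < 1"
  shows "\<forall>f\<in>V1 \<alpha>. \<forall>\<epsilon>>0. \<exists>\<delta>>0. \<forall>g\<in>V1 \<alpha>.
           wnorm \<alpha> (\<lambda>x. g x - f x) < \<delta> \<longrightarrow>
           wnorm \<alpha> (\<lambda>x. R_op \<alpha> g x - R_op \<alpha> f x) < \<epsilon>"
proof (intro ballI allI impI)
  note a = assms
  fix f and \<epsilon> :: real
  assume f: "f \<in> V1 \<alpha>" and e: "\<epsilon> > 0"
  show "\<exists>\<delta>>0. \<forall>g\<in>V1 \<alpha>. wnorm \<alpha> (\<lambda>x. g x - f x) < \<delta> \<longrightarrow> wnorm \<alpha> (\<lambda>x. R_op \<alpha> g x - R_op \<alpha> f x) < \<epsilon>"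
  proof (rule ccontr)
    assume H: "\<not> (\<exists>\<delta>>0. \<forall>g\<in>V1 \<alpha>. wnorm \<alpha> (\<lambda>x. g x - f x) < \<delta> \<longrightarrow> wnorm \<alpha> (\<lambda>x. R_op \<alpha> g x - R_op \<alpha> f x) < \<epsilon>)"
    have "\<forall>n::nat. \<exists>g. g \<in> V1 \<alpha> \<and> wnorm \<alpha> (\<lambda>x. g x - f x) < 1 / real (Suc n) \<and>
        \<not> wnorm \<alpha> (\<lambda>x. R_op \<alpha> g x - R_op \<alpha> f x) < \<epsilon>"
    proof
      fix n :: nat
      have "1 / real (Suc n) > 0" by simp
      then show "\<exists>g. g \<in> V1 \<alpha> \<and> wnorm \<alpha> (\<lambda>x. g x - f x) < 1 / real (Suc n) \<and>
        \<not> wnorm \<alpha> (\<lambda>x. R_op \<alpha> g x - R_op \<alpha> f x) < \<epsilon>" using H by blast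
    qed
    then obtain G where G: "\<And>n. G n \<in> V1 \<alpha>" "\<And>n. wnorm \<alpha> (\<lambda>x. G n x - f x) < 1 / real (Suc n)"
      "\<And>n. \<not> wnorm \<alpha> (\<lambda>x. R_op \<alpha> (G n) x - R_op \<alpha> f x) < \<epsilon>"
      by metis
    have conv: "(\<lambda>n. G n x) \<longlonglongrightarrow> f x" for x
    proof -
      have b: "\<bar>G n x - f x\<bar> \<le> (1 / real (Suc n)) * (1 + \<bar>x\<bar>) powr \<alpha>" for n
      proof -
        have bd: "\<bar>G n y - f y\<bar> \<le> 1" for y
          using V1_basic(4,5)[OF G(1)[of n], of y] V1_basic(4,5)[OF f, of y] by (simp add: abs_le_iff)
        have "\<bar>rho \<alpha> x * (G n x - f x)\<bar> \<le> wnorm \<alpha> (\<lambda>x. G n x - f x)"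
          using a bd by (intro wnorm_point[where B=1]) auto
        also have "\<dots> \<le> 1 / real (Suc n)" using G(2)[of n] by simp
        finally have "rho \<alpha> x * \<bar>G n x - f x\<bar> \<le> 1 / real (Suc n)"
          using rho_pos[of \<alpha> x] by (simp add: abs_mult)
        then have "\<bar>G n x - f x\<bar> * rho \<alpha> x \<le> 1 / real (Suc n)" by (simp only: mult.commute)
        then have "\<bar>G n x - f x\<bar> \<le> (1 / real (Suc n)) / rho \<alpha> x"
          using rho_pos[of \<alpha> x] by (simp only: pos_le_divide_eq)
        also have "(1 / real (Suc n)) / rho \<alpha> x = (1 / real (Suc n)) * (1 + \<bar>x\<bar>) powr \<alpha>"
          unfolding rho_def by (simp add: powr_minus divide_inverse)
        finally show ?thesis .
      qed
      have l: "(\<lambda>n. (1 / real (Suc n)) * (1 + \<bar>x\<bar>) powr \<alpha>) \<longlonglongrightarrow> 0 * (1 + \<bar>x\<bar>) powr \<alpha>"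
        by (intro tendsto_mult_right LIMSEQ_Suc[OF lim_const_over_n])
      have "(\<lambda>n. G n x - f x) \<longlonglongrightarrow> 0"
        by (rule Lim_null_comparison[OF _ l[simplified]]) (use b in \<open>auto intro: always_eventually\<close>)
      then show ?thesis by (rule LIM_zero_cancel)
    qed
    define M where "M = (2/\<epsilon>) powr (1/\<alpha>)"
    have M0: "M > 0" unfolding M_def using e by simp
    have rhoM: "rho \<alpha> x \<le> \<epsilon>/2" if "M < \<bar>x\<bar>" for x
    proof -
      have "rho \<alpha> x = (1 + \<bar>x\<bar>) powr (-\<alpha>)" unfolding rho_def ..
      also have "\<dots> \<le> M powr (-\<alpha>)" using that M0 a by (intro powr_mono2') auto
      also have "\<dots> = (2/\<epsilon>) powr ((1/\<alpha>) * (-\<alpha>))" unfolding M_def by (simp add: powr_powr)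
      also have "\<dots> = \<epsilon>/2" using a e by (simp add: powr_minus_divide)
      finally show ?thesis .
    qed
    define cf where "cf = c_f \<alpha> f"
    have cf: "cf > 0" unfolding cf_def using cf_pos[OF a f] .
    define BT where "BT = c1 \<alpha> * (CF \<alpha> * (4 * (1 + M^2) * integral\<^sup>L lborel (W \<alpha>)))"
    define Bn where "Bn n = c1 \<alpha> * (CF \<alpha> * integral\<^sup>L lborel (Eint \<alpha> (G n) f M)) / c_f \<alpha> (G n)
        + BT * \<bar>1 / c_f \<alpha> (G n) - 1 / cf\<bar>" for n
    have E0: "(\<lambda>n. integral\<^sup>L lborel (Eint \<alpha> (G n) f M)) \<longlonglongrightarrow> 0"
      using Eint_conv[OF a f G(1) conv] M0 by simp
    have C0: "(\<lambda>n. c_f \<alpha> (G n)) \<longlonglongrightarrow> cf" unfolding cf_def using cf_conv[OF a f G(1) conv] .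
    have "Bn \<longlonglongrightarrow> c1 \<alpha> * (CF \<alpha> * 0) / cf + BT * \<bar>1 / cf - 1 / cf\<bar>"
      unfolding Bn_def[abs_def] using cf by (intro tendsto_intros E0 C0) auto
    then have B0: "Bn \<longlonglongrightarrow> 0" by simp
    have "eventually (\<lambda>n. Bn n < \<epsilon>/2) sequentially" using e by (intro order_tendstoD(2)[OF B0]) simp
    then obtain N where N: "Bn N < \<epsilon>/2" by (auto simp: eventually_sequentially)
    have "wnorm \<alpha> (\<lambda>x. R_op \<alpha> (G N) x - R_op \<alpha> f x) \<le> \<epsilon>/2"
    proof (rule wnorm_le)
      fix x
      have rp: "0 < rho \<alpha> x" "rho \<alpha> x \<le> 1" using rho_pos rho_le1 a by auto
      have R01: "\<bar>R_op \<alpha> (G N) x - R_op \<alpha> f x\<bar> \<le> 1"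
        using R_bounds[OF a G(1)[of N], of x] R_bounds[OF a f, of x] by (simp add: abs_le_iff)
      show "\<bar>rho \<alpha> x * (R_op \<alpha> (G N) x - R_op \<alpha> f x)\<bar> \<le> \<epsilon>/2"
      proof (cases "\<bar>x\<bar> \<le> M")
        case False
        have "\<bar>rho \<alpha> x * (R_op \<alpha> (G N) x - R_op \<alpha> f x)\<bar> = rho \<alpha> x * \<bar>R_op \<alpha> (G N) x - R_op \<alpha> f x\<bar>"
          using rp by (simp add: abs_mult)
        also have "\<dots> \<le> rho \<alpha> x * 1" using R01 rp by (intro mult_left_mono) auto
        also have "\<dots> \<le> \<epsilon>/2" using rhoM[of x] False by simp
        finally show ?thesis .
      next
        case True
        define cN where "cN = c_f \<alpha> (G N)"
        have cN: "cN > 0" unfolding cN_def using cf_pos[OF a G(1)] .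
        define TN where "TN = T_op \<alpha> (G N) x"
        define T where "T = T_op \<alpha> f x"
        have "\<bar>R_op \<alpha> (G N) x - R_op \<alpha> f x\<bar> \<le> \<bar>TN / cN - T / cf\<bar>"
          unfolding R_op_def TN_def T_def cN_def cf_def by (rule max_lip)
        also have "TN / cN - T / cf = (TN - T) / cN + T * (1 / cN - 1 / cf)"
          using cN cf by (simp add: field_simps)
        also have "\<bar>\<dots>\<bar> \<le> \<bar>TN - T\<bar> / cN + \<bar>T\<bar> * \<bar>1 / cN - 1 / cf\<bar>"
          using cN by (simp add: abs_mult abs_divide abs_triangle_ineq[THEN order_trans])
        also have "\<dots> \<le> c1 \<alpha> * (CF \<alpha> * integral\<^sup>L lborel (Eint \<alpha> (G N) f M)) / cN + BT * \<bar>1 / cN - 1 / cf\<bar>"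
        proof (intro add_mono divide_right_mono mult_right_mono)
          show "\<bar>TN - T\<bar> \<le> c1 \<alpha> * (CF \<alpha> * integral\<^sup>L lborel (Eint \<alpha> (G N) f M))"
            unfolding TN_def T_def using T_diff[OF a G(1) f True] .
          show "\<bar>T\<bar> \<le> BT" unfolding T_def BT_def using T_absbound[OF a f True] .
        qed (use cN in auto)
        also have "\<dots> = Bn N" unfolding Bn_def cN_def ..
        finally have d: "\<bar>R_op \<alpha> (G N) x - R_op \<alpha> f x\<bar> \<le> \<epsilon>/2" using N by simp
        have "\<bar>rho \<alpha> x * (R_op \<alpha> (G N) x - R_op \<alpha> f x)\<bar> = rho \<alpha> x * \<bar>R_op \<alpha> (G N) x - R_op \<alpha> f x\<bar>"
          using rp by (simp add: abs_mult)
        also have "\<dots> \<le> 1 * (\<epsilon>/2)" using d rp by (intro mult_mono) auto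
        finally show ?thesis by simp
      qed
    qed
    then show False using G(3)[of N] e by simp
  qed
qed

end
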